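(* Let $\vec s:[0,1]\to\mathbb{R}^2$ and $\mathbf{\Gamma}=\operatorname{range}(\vec s)$ be as defined in the context. Then $\mathbf{\Gamma}$ is a simple curve from $\vec s(0)=(0,0)$ to $\vec s(1)=\left(0,\frac{5^3(e-1)^3}{6^3\cdot 8\pi(e^3-1)}\right)$.
   Context: Construction. For reals $a<b$ define $\varphi_{a,b}:[a,b]\to\mathbb{R}$ by $\varphi_{a,b}(t)=\frac{b-a}{4}\sin\frac{2\pi(t-a)}{b-a}$, and $\xi_{a,b}:[a,b]\to\mathbb{R}$ by $\xi_{a,b}(t)=-\varphi_{a,\frac{a+b}{2}}(t)$ for $a\le t\le\frac{a+b}{2}$ and $\xi_{a,b}(t)=\varphi_{\frac{a+b}{2},b}(t)$ for $\frac{a+b}{2}\le t\le b$. For $a<b$ and a positive integer $n$, let $d_i=\frac{a+5b}{6}+i\frac{b-a}{6n}$ for $0\le i\le n$, and define $\psi_{a,b,n}:[a,b]\to\mathbb{R}$ by $\psi_{a,b,n}(t)=\varphi_{a,d_0}(t)$ for $a\le t\le d_0$ and $\psi_{a,b,n}(t)=\xi_{d_{i-1},d_i}(t)$ for $d_{i-1}\le t\le d_i$, $1\le i\le n$. Fix a standard enumeration $M_1,M_2,\dots$ of deterministic Turing machines taking positive integer inputs, and let $\tau(n)\in\mathbb{N}\cup\{\infty\}$ be the number of steps executed by $M_n$ on input $n$ ($\infty$ if it does not halt). For $n\in\mathbb{N}$ let $t_n=1-e^{-n}$, and for $n\ge1$ let $t_n^-=\frac{t_{n-1}+4t_n}{5}$,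 $t_n^+=\frac{6t_n-t_{n-1}}{5}$. Define $a_x:[0,1]\to\mathbb{R}$ by $a_x(t)=-2^{-(n+\tau(n))}\xi_{t_n^-,t_n^+}(t)$ if $t_n^-\le t<t_n^+$ for some $n\ge1$, and $a_x(t)=0$ if no such $n$ exists, with the convention $2^{-\infty}=0$. Define $a_y:[0,1]\to\mathbb{R}$ by $a_y(t)=\psi_{t_{n-1},t_n,n}(t)$ where $n$ is the unique positive integer with $t_{n-1}\le t<t_n$ (for $0\le t<1$), and $a_y(1)=0$. Let $v_x(t)=\int_0^t a_x$, $v_y(t)=\int_0^t a_y$, $s_x(t)=\int_0^t v_x$, $s_y(t)=\int_0^t v_y$, and $\vec s=(s_x,s_y)$; $\mathbf{\Gamma}=\operatorname{range}(\vec s)$. A curve is simple if it is the range of a one-to-one continuous map from a compact interval. *)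

theory Defs
  imports "HOL-Analysis.Analysis" "HOL-Library.Extended_Nat"
begin

definition phi :: "real \<Rightarrow> real \<Rightarrow> real \<Rightarrow> real" where
  "phi a b t = (b - a) / 4 * sin (2 * pi * (t - a) / (b - a))"

definition xi :: "real \<Rightarrow> real \<Rightarrow> real \<Rightarrow> real" where
  "xi a b t = (if t \<le> (a + b) / 2 then - phi a ((a + b) / 2) t else phi ((a + b) / 2) b t)"

definition dpt :: "real \<Rightarrow> real \<Rightarrow> nat \<Rightarrow> nat \<Rightarrow> real" where
  "dpt a b n i = (a + 5 * b) / 6 + real i * (b - a) / (6 * real n)"

text \<open>For d_{i-1} < t <= d_i (1 <= i <= n) the index is i = ceiling((t - d_0) 6n/(b-a)).
  At common endpoints the pieces agree (all vanish), so the choice is immaterial.\<close>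
definition psi :: "real \<Rightarrow> real \<Rightarrow> nat \<Rightarrow> real \<Rightarrow> real" where
  "psi a b n t =
     (if t \<le> dpt a b n 0 then phi a (dpt a b n 0) t
      else (let i = nat \<lceil>(t - dpt a b n 0) * (6 * real n) / (b - a)\<rceil>
            in xi (dpt a b n (i - 1)) (dpt a b n i) t))"

definition tt :: "nat \<Rightarrow> real" where
  "tt n = 1 - exp (- real n)"

definition ttm :: "nat \<Rightarrow> real" where
  "ttm n = (tt (n - 1) + 4 * tt n) / 5"

definition ttp :: "nat \<Rightarrow> real" where
  "ttp n = (6 * tt n - tt (n - 1)) / 5"

definition wt :: "(nat \<Rightarrow> enat) \<Rightarrow> nat \<Rightarrow> real" where
  "wt tau n = (case tau n of enat k \<Rightarrow> (1/2) ^ (n + k) | \<infinity> \<Rightarrow> 0)"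

definition acc_x :: "(nat \<Rightarrow> enat) \<Rightarrow> real \<Rightarrow> real" where
  "acc_x tau t =
     (if \<exists>n\<ge>1. ttm n \<le> t \<and> t < ttp n
      then (let n = (THE n. n \<ge> 1 \<and> ttm n \<le> t \<and> t < ttp n)
            in - wt tau n * xi (ttm n) (ttp n) t)
      else 0)"

definition acc_y :: "real \<Rightarrow> real" where
  "acc_y t =
     (if 0 \<le> t \<and> t < 1
      then (let n = (THE n. n \<ge> 1 \<and> tt (n - 1) \<le> t \<and> t < tt n)
            in psi (tt (n - 1)) (tt n) n t)
      else 0)"

definition vel_x :: "(nat \<Rightarrow> enat) \<Rightarrow> real \<Rightarrow> real" where
  "vel_x tau t = integral {0..t} (acc_x tau)"

definition vel_y :: "real \<Rightarrow> real" where
  "vel_y t = integral {0..t} acc_y"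

definition pos_x :: "(nat \<Rightarrow> enat) \<Rightarrow> real \<Rightarrow> real" where
  "pos_x tau t = integral {0..t} (vel_x tau)"

definition pos_y :: "real \<Rightarrow> real" where
  "pos_y t = integral {0..t} vel_y"

definition svec :: "(nat \<Rightarrow> enat) \<Rightarrow> real \<Rightarrow> real \<times> real" where
  "svec tau t = (pos_x tau t, pos_y t)"

definition Gam :: "(nat \<Rightarrow> enat) \<Rightarrow> (real \<times> real) set" where
  "Gam tau = svec tau ` {0..1}"

end

theory Submission
  imports Defs
begin


definition Gw :: "real \<Rightarrow> real" where
  "Gw x = arccos (cos x) - \<bar>sin x\<bar> * cos x"

lemma D_sabs:
  assumes "sin x \<noteq> 0"
  shows "((\<lambda>x. sin x * \<bar>sin x\<bar>) has_real_derivative 2 * \<bar>sin x\<bar> * cos x) (at x)"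
proof (cases "sin x > 0")
  case True
  have o: "open {y::real. 0 < sin y}" by (rule open_Collect_less) (auto intro: continuous_intros)
  have "((\<lambda>x. sin x * sin x) has_real_derivative 2 * \<bar>sin x\<bar> * cos x) (at x)"
    using True by (auto intro!: derivative_eq_intros)
  then show ?thesis
    by (rule has_field_derivative_transform_within_open[OF _ o]) (use True in auto)
next
  case False
  then have F: "sin x < 0" using assms by auto
  have o: "open {y::real. sin y < 0}" by (rule open_Collect_less) (auto intro: continuous_intros)
  have "((\<lambda>x. - (sin x * sin x)) has_real_derivative 2 * \<bar>sin x\<bar> * cos x) (at x)"
    using F by (auto intro!: derivative_eq_intros)
  then show ?thesis
    by (rule has_field_derivative_transform_within_open[OF _ o]) (use F in auto)
qed

lemma D_G:
  assumes "sin x \<noteq> 0"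
  shows "(Gw has_real_derivative 2 * sin x * \<bar>sin x\<bar>) (at x)"
proof -
  have s2: "(sin x)\<^sup>2 > 0" using assms by simp
  have "(cos x)\<^sup>2 < 1" using s2 sin_cos_squared_add[of x] by linarith
  then have "\<bar>cos x\<bar> < 1" by (simp add: abs_square_less_1)
  then have c1: "- 1 < cos x" "cos x < 1" by auto
  have sq: "sqrt (1 - (cos x)\<^sup>2) = \<bar>sin x\<bar>"
    by (simp add: sin_squared_eq[symmetric])
  have dA: "((\<lambda>x. arccos (cos x)) has_real_derivative (sin x / \<bar>sin x\<bar>)) (at x)"
  proof -
    have "((\<lambda>x. arccos (cos x)) has_real_derivative inverse (- sqrt (1 - (cos x)\<^sup>2)) * - sin x) (at x)"
      by (rule DERIV_chain2[where g=cos, OF DERIV_arccos[OF c1]]) (auto intro!: derivative_eq_intros)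
    then show ?thesis unfolding sq by (simp add: divide_inverse mult.commute)
  qed
  have dB: "((\<lambda>x. sin x * cos x) has_real_derivative (cos x * cos x - sin x * sin x)) (at x)"
    by (auto intro!: derivative_eq_intros)
  show ?thesis
  proof (cases "sin x > 0")
    case True
    have o: "open {y::real. 0 < sin y}" by (rule open_Collect_less) (auto intro: continuous_intros)
    have "((\<lambda>x. arccos (cos x) - sin x * cos x) has_real_derivative
        (sin x / \<bar>sin x\<bar> - (cos x * cos x - sin x * sin x))) (at x)"
      by (rule DERIV_diff[OF dA dB])
    then have "(Gw has_real_derivative (sin x / \<bar>sin x\<bar> - (cos x * cos x - sin x * sin x))) (at x)"
      by (rule has_field_derivative_transform_within_open[OF _ o]) (use True in \<open>auto simp: Gw_def\<close>)
    moreover have "sin x / \<bar>sin x\<bar> - (cos x * cos x - sin x * sin x) = 2 * sin x * \<bar>sin x\<bar>"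
      using True sin_cos_squared_add[of x] by (simp add: power2_eq_square)
    ultimately show ?thesis by simp
  next
    case False
    then have F: "sin x < 0" using assms by auto
    have o: "open {y::real. sin y < 0}" by (rule open_Collect_less) (auto intro: continuous_intros)
    have "((\<lambda>x. arccos (cos x) + sin x * cos x) has_real_derivative
        (sin x / \<bar>sin x\<bar> + (cos x * cos x - sin x * sin x))) (at x)"
      by (rule DERIV_add[OF dA dB])
    then have "(Gw has_real_derivative (sin x / \<bar>sin x\<bar> + (cos x * cos x - sin x * sin x))) (at x)"
      by (rule has_field_derivative_transform_within_open[OF _ o]) (use F in \<open>auto simp: Gw_def\<close>)
    moreover have "sin x / \<bar>sin x\<bar> + (cos x * cos x - sin x * sin x) = 2 * sin x * \<bar>sin x\<bar>"
      using F sin_cos_squared_add[of x] by (simp add: power2_eq_square)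
    ultimately show ?thesis by simp
  qed
qed



definition wa :: "real \<Rightarrow> real \<Rightarrow> real \<Rightarrow> real" where
  "wa d h t = h / 4 * (\<bar>sin (2 * pi * (t - d) / h)\<bar> * cos (2 * pi * (t - d) / h))"
definition wv :: "real \<Rightarrow> real \<Rightarrow> real \<Rightarrow> real" where
  "wv d h t = h\<^sup>2 / (16 * pi) * (sin (2 * pi * (t - d) / h) * \<bar>sin (2 * pi * (t - d) / h)\<bar>)"
definition wp :: "real \<Rightarrow> real \<Rightarrow> real \<Rightarrow> real" where
  "wp d h t = h ^ 3 / (64 * pi\<^sup>2) * Gw (2 * pi * (t - d) / h)"

lemma finite_sin_zeros:
  assumes "h > 0"
  shows "finite {s \<in> {a..b}. sin (2 * pi * (s - d) / h) = 0}"
proof -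
  have "{s \<in> {a..b}. sin (2 * pi * (s - d) / h) = 0} \<subseteq>
      (\<lambda>i::int. d + of_int i * h / 2) ` {\<lfloor>2 * (a - d) / h\<rfloor>..\<lceil>2 * (b - d) / h\<rceil>}"
  proof
    fix s assume s: "s \<in> {s \<in> {a..b}. sin (2 * pi * (s - d) / h) = 0}"
    then obtain i :: int where i: "2 * pi * (s - d) / h = of_int i * pi"
      by (auto simp: sin_zero_iff_int2)
    then have "pi * (2 * (s - d)) = pi * (of_int i * h)" using assms by (simp add: field_simps)
    then have "2 * (s - d) = of_int i * h" by simp
    then have si: "s = d + of_int i * h / 2" by (simp add: field_simps)
    have ii: "of_int i = 2 * (s - d) / h" using si assms by (simp add: field_simps)
    have "2 * (a - d) / h \<le> 2 * (s - d) / h" "2 * (s - d) / h \<le> 2 * (b - d) / h"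
      using s assms by (auto intro!: divide_right_mono)
    then have "\<lfloor>2 * (a - d) / h\<rfloor> \<le> \<lfloor>of_int i :: real\<rfloor>" "\<lceil>of_int i :: real\<rceil> \<le> \<lceil>2 * (b - d) / h\<rceil>"
      unfolding ii by (auto intro: floor_mono ceiling_mono)
    then have "\<lfloor>2 * (a - d) / h\<rfloor> \<le> i" "i \<le> \<lceil>2 * (b - d) / h\<rceil>" by simp_all
    then show "s \<in> (\<lambda>i::int. d + of_int i * h / 2) ` {\<lfloor>2 * (a - d) / h\<rfloor>..\<lceil>2 * (b - d) / h\<rceil>}"
      using si by auto
  qed
  then show ?thesis by (rule finite_subset) auto
qed

lemma ftc_sin_exc:
  assumes h: "h > 0" and ab: "a \<le> b" and c: "continuous_on {a..b} F"
    and D: "\<And>x. sin (2 * pi * (x - d) / h) \<noteq> 0 \<Longrightarrow> (F has_real_derivative f x) (at x)"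
  shows "(f has_integral (F b - F a)) {a..b}"
proof (rule fundamental_theorem_of_calculus_interior_strong[OF finite_sin_zeros[OF h, of a b d] ab _ c])
  fix x assume "x \<in> {a<..<b} - {s \<in> {a..b}. sin (2 * pi * (s - d) / h) = 0}"
  then have "sin (2 * pi * (x - d) / h) \<noteq> 0" by auto
  then show "(F has_vector_derivative f x) (at x)"
    using D has_real_derivative_iff_has_vector_derivative by blast
qed

lemma wv_deriv:
  assumes h: "h > 0" and s: "sin (2 * pi * (x - d) / h) \<noteq> 0"
  shows "(wv d h has_real_derivative wa d h x) (at x)"
proof -
  have "((\<lambda>x. h\<^sup>2 / (16 * pi) * (\<lambda>x. sin x * \<bar>sin x\<bar>) (2 * pi * (x - d) / h)) has_real_derivative
     h\<^sup>2 / (16 * pi) * ((2 * \<bar>sin (2 * pi * (x - d) / h)\<bar> * cos (2 * pi * (x - d) / h)) * (2 * pi / h))) (at x)"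
    by (intro DERIV_cmult DERIV_chain2[where g="\<lambda>x. 2 * pi * (x - d) / h", OF D_sabs[OF s]])
       (use h in \<open>auto intro!: derivative_eq_intros\<close>)
  moreover have "h\<^sup>2 / (16 * pi) * ((2 * \<bar>sin (2 * pi * (x - d) / h)\<bar> * cos (2 * pi * (x - d) / h)) * (2 * pi / h))
      = wa d h x" using h by (simp add: wa_def power2_eq_square field_simps)
  ultimately show ?thesis by (simp add: wv_def[abs_def])
qed

lemma wp_deriv:
  assumes h: "h > 0" and s: "sin (2 * pi * (x - d) / h) \<noteq> 0"
  shows "(wp d h has_real_derivative wv d h x) (at x)"
proof -
  have "((\<lambda>x. h ^ 3 / (64 * pi\<^sup>2) * Gw (2 * pi * (x - d) / h)) has_real_derivative
     h ^ 3 / (64 * pi\<^sup>2) * ((2 * sin (2 * pi * (x - d) / h) * \<bar>sin (2 * pi * (x - d) / h)\<bar>) * (2 * pi / h))) (at x)"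
    by (intro DERIV_cmult DERIV_chain2[where g="\<lambda>x. 2 * pi * (x - d) / h", OF D_G[OF s]])
       (use h in \<open>auto intro!: derivative_eq_intros\<close>)
  moreover have "h ^ 3 / (64 * pi\<^sup>2) * ((2 * sin (2 * pi * (x - d) / h) * \<bar>sin (2 * pi * (x - d) / h)\<bar>) * (2 * pi / h))
      = wv d h x" using h by (simp add: wv_def power2_eq_square power3_eq_cube field_simps)
  ultimately show ?thesis by (simp add: wp_def[abs_def])
qed

lemma cont_Gw: "continuous_on S Gw"
  unfolding Gw_def[abs_def]
  by (intro continuous_intros) auto

lemma cont_wv: "h > 0 \<Longrightarrow> continuous_on S (wv d h)"
  unfolding wv_def[abs_def] by (intro continuous_intros) auto

lemma cont_wp: "h > 0 \<Longrightarrow> continuous_on S (wp d h)"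
  unfolding wp_def[abs_def]
  by (intro continuous_intros continuous_on_compose2[OF cont_Gw[of UNIV]]) auto

lemma wa_int:
  assumes "h > 0" "a \<le> b"
  shows "(wa d h has_integral (wv d h b - wv d h a)) {a..b}"
  by (rule ftc_sin_exc[OF assms cont_wv[OF assms(1)]]) (rule wv_deriv[OF assms(1)])

lemma wv_int:
  assumes "h > 0" "a \<le> b"
  shows "(wv d h has_integral (wp d h b - wp d h a)) {a..b}"
  by (rule ftc_sin_exc[OF assms cont_wp[OF assms(1)]]) (rule wp_deriv[OF assms(1)])

lemma th_period: "h > 0 \<Longrightarrow> 2 * pi * (d + real k * h - d) / h = 2 * real k * pi"
  by (simp add: field_simps)

lemma wv_period: "h > 0 \<Longrightarrow> wv d h (d + real k * h) = 0"
  unfolding wv_def th_period by simp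

lemma wp_period: "h > 0 \<Longrightarrow> wp d h (d + real k * h) = 0"
  unfolding wp_def Gw_def th_period by simp

lemma wv_0: "wv d h d = 0" and wp_0: "wp d h d = 0"
  by (simp_all add: wv_def wp_def Gw_def)

lemma Gw_nonneg: "Gw x \<ge> 0"
proof -
  define p where "p = arccos (cos x)"
  have p: "0 \<le> p" "p \<le> pi" using arccos_bounded[of "cos x"] by (auto simp: p_def)
  have cp: "cos p = cos x" by (simp add: p_def)
  have sp: "sin p = \<bar>sin x\<bar>" 
    using sin_arccos_abs[of "cos x"] by (simp add: p_def sin_squared_eq[symmetric])
  have "sin p * cos p = sin (2 * p) / 2" by (simp add: sin_double)
  also have "\<dots> \<le> p" using abs_sin_x_le_abs_x[of "2 * p"] p by auto
  finally show ?thesis unfolding Gw_def p_def[symmetric] using cp sp by simp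
qed

lemma Gw_le: "Gw x \<le> pi + 1"
proof -
  have "arccos (cos x) \<le> pi" using arccos_bounded[of "cos x"] by auto
  moreover have "- (\<bar>sin x\<bar> * cos x) \<le> 1"
    using abs_sin_le_one[of x] abs_cos_le_one[of x]
    by (smt (verit, best) abs_mult abs_le_iff mult_le_one abs_ge_zero)
  ultimately show ?thesis unfolding Gw_def by linarith
qed

lemma wv_bound: "h > 0 \<Longrightarrow> \<bar>wv d h t\<bar> \<le> h\<^sup>2 / (16 * pi)"
proof -
  assume h: "h > 0"
  have "\<bar>sin (2 * pi * (t - d) / h)\<bar> * \<bar>sin (2 * pi * (t - d) / h)\<bar> \<le> 1"
    by (rule mult_le_one) auto
  moreover have "\<bar>wv d h t\<bar> = h\<^sup>2 / (16 * pi) * (\<bar>sin (2 * pi * (t - d) / h)\<bar> * \<bar>sin (2 * pi * (t - d) / h)\<bar>)"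
    by (simp add: wv_def abs_mult)
  ultimately show ?thesis using mult_left_le[of _ "h\<^sup>2 / (16 * pi)"] by simp
qed

lemma wp_bounds: "h > 0 \<Longrightarrow> 0 \<le> wp d h t \<and> wp d h t \<le> h ^ 3 / (64 * pi\<^sup>2) * (pi + 1)"
proof -
  assume h: "h > 0"
  have "h ^ 3 / (64 * pi\<^sup>2) * Gw (2 * pi * (t - d) / h) \<le> h ^ 3 / (64 * pi\<^sup>2) * (pi + 1)"
    by (rule mult_left_mono[OF Gw_le]) (use h in simp)
  then show ?thesis unfolding wp_def using Gw_nonneg h by simp
qed

lemma wp_strict:
  assumes h: "h > 0" and st: "d \<le> s" "s < s'" "s' \<le> d + h / 2"
  shows "wp d h s < wp d h s'"
proof (rule DERIV_pos_imp_increasing_open[OF st(2) _ cont_wp[OF h]])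
  fix x assume x: "s < x" "x < s'"
  have "pi * (2 * (x - d)) < pi * h"
    using x st h by (intro mult_strict_left_mono) auto
  then have th: "0 < 2 * pi * (x - d) / h" "2 * pi * (x - d) / h < pi"
    using x st h by (auto simp: field_simps)
  then have sx: "sin (2 * pi * (x - d) / h) > 0" by (rule sin_gt_zero)
  have "wv d h x > 0" unfolding wv_def using sx h by simp
  then show "\<exists>y. (wp d h has_real_derivative y) (at x) \<and> 0 < y"
    using wp_deriv[OF h, of x d] sx by auto
qed



definition pa :: "real \<Rightarrow> real \<Rightarrow> real \<Rightarrow> real" where
  "pa a c t = c / 4 * sin (2 * pi * (t - a) / c)"
definition pv :: "real \<Rightarrow> real \<Rightarrow> real \<Rightarrow> real" where
  "pv a c t = c\<^sup>2 / (8 * pi) * (1 - cos (2 * pi * (t - a) / c))"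
definition pp :: "real \<Rightarrow> real \<Rightarrow> real \<Rightarrow> real" where
  "pp a c t = c\<^sup>2 / (8 * pi) * ((t - a) - c / (2 * pi) * sin (2 * pi * (t - a) / c))"

lemma pv_deriv: "c > 0 \<Longrightarrow> (pv a c has_real_derivative pa a c x) (at x)"
  unfolding pv_def[abs_def] pa_def
  by (auto intro!: derivative_eq_intros simp: power2_eq_square field_simps)

lemma pp_deriv: "c > 0 \<Longrightarrow> (pp a c has_real_derivative pv a c x) (at x)"
  unfolding pp_def[abs_def] pv_def
  by (auto intro!: derivative_eq_intros simp: power2_eq_square field_simps)

lemma cont_pv: "c > 0 \<Longrightarrow> continuous_on S (pv a c)"
  unfolding pv_def[abs_def] by (intro continuous_intros) auto

lemma cont_pp: "c > 0 \<Longrightarrow> continuous_on S (pp a c)"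
  unfolding pp_def[abs_def] by (intro continuous_intros) auto

lemma pa_int: "c > 0 \<Longrightarrow> s \<le> t \<Longrightarrow> (pa a c has_integral (pv a c t - pv a c s)) {s..t}"
  by (rule ftc_sin_exc[where d=0, OF _ _ cont_pv]) (auto intro: pv_deriv)

lemma pv_int: "c > 0 \<Longrightarrow> s \<le> t \<Longrightarrow> (pv a c has_integral (pp a c t - pp a c s)) {s..t}"
  by (rule ftc_sin_exc[where d=0, OF _ _ cont_pp]) (auto intro: pp_deriv)

lemma pv_0: "pv a c a = 0" and pp_0: "pp a c a = 0"
  by (simp_all add: pv_def pp_def)

lemma pv_end: "c > 0 \<Longrightarrow> pv a c (a + c) = 0"
  by (simp add: pv_def)

lemma pp_end: "c > 0 \<Longrightarrow> pp a c (a + c) = c ^ 3 / (8 * pi)"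
  by (simp add: pp_def power2_eq_square power3_eq_cube)

lemma pp_34: "c > 0 \<Longrightarrow> pp a c (a + 3 * c / 4) = c ^ 3 / (8 * pi) * (3 / 4 + 1 / (2 * pi))"
proof -
  assume c: "c > 0"
  have e: "2 * pi * (a + 3 * c / 4 - a) / c = pi + pi / 2" using c by (simp add: field_simps)
  have "sin (pi + pi / 2) = -1" by (simp only: sin_add sin_pi cos_pi sin_pi_half cos_pi_half)
  then have "sin (2 * pi * (a + 3 * c / 4 - a) / c) = -1" unfolding e .
  then show ?thesis using c by (simp add: pp_def power2_eq_square power3_eq_cube field_simps)
qed

lemma pv_pos:
  assumes c: "c > 0" and x: "a < x" "x < a + c"
  shows "pv a c x > 0"
proof -
  have "cos (2 * pi * (x - a) / c) \<noteq> 1"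
  proof
    assume "cos (2 * pi * (x - a) / c) = 1"
    then obtain k :: int where k: "2 * pi * (x - a) / c = of_int k * 2 * pi"
      by (auto simp: cos_one_2pi_int)
    then have "pi * (2 * (x - a)) = pi * (2 * (of_int k * c))" using c by (simp add: field_simps)
    then have "x - a = of_int k * c" by simp
    then have "0 < of_int k * c" "of_int k * c < 1 * c" using x by linarith+
    then have "0 < real_of_int k" "real_of_int k < 1"
      using c mult_less_cancel_right2[of "real_of_int k" c] by (auto simp: zero_less_mult_iff)
    then have "0 < k" "k < 1" by simp_all
    then show False by simp
  qed
  then have "cos (2 * pi * (x - a) / c) < 1" using cos_le_one[of "2 * pi * (x - a) / c"] by linarith
  then show ?thesis using c by (simp add: pv_def)
qed

lemma pp_strict:
  assumes c: "c > 0" and st: "a \<le> s" "s < s'" "s' \<le> a + c"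
  shows "pp a c s < pp a c s'"
proof (rule DERIV_pos_imp_increasing_open[OF st(2) _ cont_pp[OF c]])
  fix x assume x: "s < x" "x < s'"
  then show "\<exists>y. (pp a c has_real_derivative y) (at x) \<and> 0 < y"
    using pp_deriv[OF c, of a x] pv_pos[OF c, of a x] st by auto
qed

lemma pv_nonneg: "c > 0 \<Longrightarrow> 0 \<le> pv a c t"
  using cos_le_one by (simp add: pv_def)

lemma pv_le: "c > 0 \<Longrightarrow> pv a c t \<le> c\<^sup>2 / (4 * pi)"
proof -
  assume c: "c > 0"
  have "1 - cos (2 * pi * (t - a) / c) \<le> 2" using cos_ge_minus_one[of "2 * pi * (t - a) / c"] by linarith
  then have "c\<^sup>2 / (8 * pi) * (1 - cos (2 * pi * (t - a) / c)) \<le> c\<^sup>2 / (8 * pi) * 2"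
    by (intro mult_left_mono) auto
  then show ?thesis by (simp add: pv_def)
qed

lemma wa_shift:
  assumes h: "h > 0"
  shows "wa (d + real k * h) h t = wa d h t"
proof -
  have e: "2 * pi * (t - (d + real k * h)) / h = 2 * pi * (t - d) / h - 2 * real k * pi"
    using h by (simp add: field_simps)
  show ?thesis unfolding wa_def e by (simp add: sin_diff cos_diff)
qed

lemma xi_wave:
  assumes ab: "a < b" and t: "a \<le> t" "t \<le> b"
  shows "xi a b t = - wa a (b - a) t"
proof -
  define h where "h = b - a"
  have h: "h > 0" using ab by (simp add: h_def)
  define th where "th = 2 * pi * (t - a) / h"
  have th0: "0 \<le> th" using t h by (simp add: th_def)
  have "pi * (2 * (t - a)) \<le> pi * (2 * h)" using t by (simp add: h_def)
  then have th2: "th \<le> 2 * pi" using h by (simp add: th_def field_simps)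
  show ?thesis
  proof (cases "t \<le> (a + b) / 2")
    case True
    have "pi * (2 * (t - a)) \<le> pi * h" using True by (simp add: h_def)
    then have "th \<le> pi" using h by (simp add: th_def field_simps)
    then have s: "sin th \<ge> 0" using th0 by (simp add: sin_ge_zero)
    have e: "2 * pi * (t - a) / ((a + b) / 2 - a) = 2 * th" using h by (simp add: th_def h_def field_simps)
    have sd: "sin (2 * th) = 2 * sin th * cos th" by (rule sin_double)
    show ?thesis using True s
      unfolding xi_def phi_def wa_def e th_def[symmetric] h_def[symmetric] sd
      by (simp add: h_def field_simps)
  next
    case False
    have "pi * h \<le> pi * (2 * (t - a))" using False by (simp add: h_def)
    then have "pi \<le> th" using h by (simp add: th_def field_simps)
    then have s: "sin th \<le> 0"
      using sin_ge_zero[of "th - pi"] th2 by (simp add: sin_diff)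
    have e: "2 * pi * (t - (a + b) / 2) / (b - (a + b) / 2) = 2 * th - 2 * pi"
      using h by (simp add: th_def h_def field_simps)
    have sd: "sin (2 * th - 2 * pi) = 2 * sin th * cos th" by (simp add: sin_diff sin_double)
    show ?thesis using False s
      unfolding xi_def phi_def wa_def e th_def[symmetric] h_def[symmetric] sd
      by (simp add: h_def field_simps)
  qed
qed



definition E :: "nat \<Rightarrow> real" where "E n = exp (- real n)"

lemma e2: "2 \<le> exp (1::real)" using exp_ge_add_one_self[of 1] by simp
lemma e3: "exp (1::real) \<le> 3" by (rule exp_le)

lemma E_pos: "E n > 0" by (simp add: E_def)
lemma E_le1: "E n \<le> 1" by (simp add: E_def)
lemma tt_E: "tt n = 1 - E n" by (simp add: tt_def E_def)
lemma E_pred: "n \<ge> 1 \<Longrightarrow> E (n - 1) = E n * exp 1"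
  by (simp add: E_def of_nat_diff exp_add[symmetric])
lemma E_pred': "Suc 0 \<le> n \<Longrightarrow> E (n - Suc 0) = E n * exp 1"
  using E_pred by simp
lemma E_mono: "m < n \<Longrightarrow> E n * exp 1 \<le> E m"
proof -
  assume "m < n"
  then have "- real m \<ge> 1 - real n" by simp
  then have "exp (1 - real n) \<le> exp (- real m)" by simp
  then show ?thesis by (simp add: E_def exp_add[symmetric])
qed
lemma E_strict: "m < n \<Longrightarrow> E n < E m"
proof -
  assume "m < n"
  then have "E n * exp 1 \<le> E m" by (rule E_mono)
  moreover have "E n < E n * exp 1" using E_pos[of n] e2 by simp
  ultimately show ?thesis by linarith
qed

lemma ttm_E: "n \<ge> 1 \<Longrightarrow> ttm n = 1 - E n * (exp 1 + 4) / 5"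
  by (simp add: ttm_def tt_E E_pred E_pred' field_simps)
lemma ttp_E: "n \<ge> 1 \<Longrightarrow> ttp n = 1 - E n * (6 - exp 1) / 5"
  by (simp add: ttp_def tt_E E_pred E_pred' field_simps)
lemma ttp_0: "ttp 0 = 0" by (simp add: ttp_def tt_def)
lemma tt_0: "tt 0 = 0" by (simp add: tt_def)

definition d0 :: "nat \<Rightarrow> real" where "d0 n = dpt (tt (n - 1)) (tt n) n 0"
definition cc :: "nat \<Rightarrow> real" where "cc n = d0 n - tt (n - 1)"
definition hh :: "nat \<Rightarrow> real" where "hh n = (tt n - tt (n - 1)) / (6 * real n)"
definition pq :: "nat \<Rightarrow> real" where "pq n = tt (n - 1) + 3 * cc n / 4"
definition HH :: "nat \<Rightarrow> real" where "HH n = ttp n - ttm n"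

lemma d0_E: "n \<ge> 1 \<Longrightarrow> d0 n = 1 - E n * (exp 1 + 5) / 6"
  by (simp add: d0_def dpt_def tt_E E_pred E_pred' field_simps)
lemma cc_E: "n \<ge> 1 \<Longrightarrow> cc n = 5 * E n * (exp 1 - 1) / 6"
  by (simp add: cc_def d0_E tt_E E_pred E_pred' field_simps)
lemma pq_E: "n \<ge> 1 \<Longrightarrow> pq n = 1 - E n * (3 * exp 1 + 5) / 8"
  by (simp add: pq_def cc_E tt_E E_pred E_pred' field_simps)
lemma HH_E: "n \<ge> 1 \<Longrightarrow> HH n = 2 * E n * (exp 1 - 1) / 5"
  by (simp add: HH_def ttp_E ttm_E field_simps)
lemma hh_E: "n \<ge> 1 \<Longrightarrow> hh n = E n * (exp 1 - 1) / (6 * real n)"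
  by (simp add: hh_def tt_E E_pred E_pred' field_simps)

lemma cc_pos: "n \<ge> 1 \<Longrightarrow> cc n > 0"
  using E_pos[of n] e2 by (simp add: cc_E)
lemma hh_pos: "n \<ge> 1 \<Longrightarrow> hh n > 0"
  using E_pos[of n] e2 by (simp add: hh_E)
lemma HH_pos: "n \<ge> 1 \<Longrightarrow> HH n > 0"
  using E_pos[of n] e2 by (simp add: HH_E)

lemma ord1:
  assumes "n \<ge> 1"
  shows "tt (n - 1) < pq n" "pq n < ttm n" "ttm n < d0 n" "d0 n < tt n" "tt n < ttp n"
    "ttp (n - 1) < pq n"
proof -
  have E: "E n > 0" by (rule E_pos)
  note e = e2 e3
  show "tt (n - 1) < pq n" using E e assms by (simp add: tt_E E_pred' pq_E field_simps)
  show "pq n < ttm n" using E e assms by (simp add: ttm_E pq_E field_simps)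
  show "ttm n < d0 n" using E e assms by (simp add: ttm_E d0_E field_simps)
  show "d0 n < tt n" using E e assms by (simp add: tt_E d0_E field_simps)
  show "tt n < ttp n" using E e assms by (simp add: tt_E ttp_E field_simps)
  show "ttp (n - 1) < pq n"
  proof (cases "n = 1")
    case True
    have "E 1 * exp 1 = 1" by (simp add: E_def exp_minus)
    moreover have "E 1 < E 0" by (rule E_strict) simp
    moreover have "E 0 = 1" by (simp add: E_def)
    ultimately have "E 1 * (3 * exp 1 + 5) < 8" by (simp only: distrib_left)
    then show ?thesis using True E e by (simp add: ttp_0 pq_E field_simps)
  next
    case False
    then have n2: "n - 1 \<ge> 1" using assms by simp
    have "(8 * exp 1 - 25) * (exp 1 - 1) < (0::real)"
      using e by (intro mult_neg_pos) auto
    then have "(3 * exp 1 + 5) / 8 < exp 1 * (6 - exp 1) / (5::real)"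
      by (simp add: field_simps algebra_simps)
    then have "E n * ((3 * exp 1 + 5) / 8) < E n * (exp 1 * (6 - exp 1) / 5)"
      using E by (rule mult_strict_left_mono)
    then show ?thesis using assms n2
      by (simp add: ttp_E pq_E E_pred E_pred' field_simps)
  qed
qed

lemma tt_strict: "m < n \<Longrightarrow> tt m < tt n"
  using E_strict by (simp add: tt_E)

lemma tt_lt1: "tt n < 1" using E_pos by (simp add: tt_E)
lemma tt_ge0: "tt n \<ge> 0" using E_le1 by (simp add: tt_E)

lemma ttp_ttm: "m < n \<Longrightarrow> n \<ge> 1 \<Longrightarrow> ttp m < ttm n"
proof (cases "m = 0")
  case True
  assume "n \<ge> 1"
  have a: "E n * exp 1 \<le> 1" using E_mono[of 0 n] \<open>n \<ge> 1\<close> by (simp add: E_def)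
  have b: "E n * 2 \<le> E n * exp 1" using e2 E_pos[of n] by simp
  have "E n * (exp 1 + 4) < 5" using a b E_pos[of n] by (simp only: distrib_left)
  then show ?thesis using True \<open>n \<ge> 1\<close> by (simp add: ttp_0 ttm_E field_simps)
next
  case False
  assume mn: "m < n" "n \<ge> 1"
  have em: "E n * exp 1 \<le> E m" by (rule E_mono[OF mn(1)])
  have "0 < (exp 1 - 1) * (4 - exp (1::real))"
    using e2 e3 by (intro mult_pos_pos) auto
  then have "exp 1 + 4 < exp 1 * (6 - exp (1::real))"
    by (simp add: algebra_simps)
  then have "E n * (exp 1 + 4) < E n * (exp 1 * (6 - exp 1))"
    using E_pos by (rule mult_strict_left_mono)
  also have "\<dots> = (E n * exp 1) * (6 - exp 1)" by simp
  also have "\<dots> \<le> E m * (6 - exp 1)" using em e3 by (intro mult_right_mono) auto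
  finally show ?thesis using False mn by (simp add: ttp_E ttm_E field_simps)
qed

lemma ttm_ttp: "n \<ge> 1 \<Longrightarrow> ttm n < ttp n"
  using ord1[of n] by linarith

lemma d0_end: "n \<ge> 1 \<Longrightarrow> d0 n + real n * hh n = tt n"
  by (simp add: d0_E hh_E tt_E field_simps)
lemma ttm_mid: "n \<ge> 1 \<Longrightarrow> ttm n + HH n / 2 = tt n"
  by (simp add: ttm_E HH_E tt_E field_simps)
lemma ttm_end: "n \<ge> 1 \<Longrightarrow> ttm n + 1 * HH n = ttp n"
  by (simp add: HH_def)
lemma pq_cc: "pq n = tt (n - 1) + 3 * cc n / 4" by (simp add: pq_def)
lemma d0_cc: "d0 n = tt (n - 1) + cc n" by (simp add: cc_def)



lemma E_antimono: "m \<le> n \<Longrightarrow> E n \<le> E m"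
  using E_strict[of m n] by (cases "m = n") auto

lemma tt_mono: "m \<le> n \<Longrightarrow> tt m \<le> tt n"
  using E_antimono by (simp add: tt_E)

lemma dpt_eq: "n \<ge> 1 \<Longrightarrow> dpt a b n j = dpt a b n 0 + real j * ((b - a) / (6 * real n))"
  by (simp add: dpt_def)

lemma psi_A: "t \<le> dpt a b n 0 \<Longrightarrow> psi a b n t = pa a (dpt a b n 0 - a) t"
  by (simp add: psi_def phi_def pa_def)

lemma psi_B:
  assumes n: "n \<ge> 1" and ab: "a < b" and t: "dpt a b n 0 < t" "t \<le> b"
  shows "psi a b n t = - wa (dpt a b n 0) ((b - a) / (6 * real n)) t"
proof -
  define d where "d = dpt a b n 0"
  define h where "h = (b - a) / (6 * real n)"
  have h: "h > 0" using n ab by (simp add: h_def)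
  define u where "u = (t - d) * (6 * real n) / (b - a)"
  have u: "u = (t - d) / h" using n ab by (simp add: u_def h_def field_simps)
  have u0: "0 < u" using t h by (simp add: u d_def)
  have bd: "b - d = real n * h" using n by (simp add: d_def h_def dpt_def field_simps)
  have "t - d \<le> real n * h" using t bd by (simp add: d_def)
  then have un: "u \<le> real n" using h by (simp add: u field_simps)
  define i where "i = nat \<lceil>u\<rceil>"
  have ci: "\<lceil>u\<rceil> \<ge> 1" using u0 by (simp add: le_ceiling_iff)
  then have ri: "real i = of_int \<lceil>u\<rceil>" by (simp add: i_def)
  have "real i \<ge> 1" using ri ci by simp
  then have i1: "i \<ge> 1" by simp
  have iu: "real i - 1 < u" "u \<le> real i" using ri ceiling_correct[of u] by linarith+
  have dpti: "\<And>j. dpt a b n j = d + real j * h" unfolding d_def h_def dpt_def by simp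
  have ri1: "real (i - 1) = real i - 1" using i1 by (simp add: of_nat_diff)
  have tt: "t = d + u * h" using h by (simp add: u field_simps)
  have lo: "dpt a b n (i - 1) \<le> t" unfolding dpti ri1 tt
    using iu h by (simp add: mult_right_mono)
  have hi: "t \<le> dpt a b n i" unfolding dpti tt using iu h by (simp add: mult_right_mono)
  have lt: "dpt a b n (i - 1) < dpt a b n i" unfolding dpti ri1 using h by simp
  have diff: "dpt a b n i - dpt a b n (i - 1) = h" unfolding dpti ri1 by (simp add: algebra_simps)
  have "psi a b n t = xi (dpt a b n (i - 1)) (dpt a b n i) t"
    using t unfolding psi_def Let_def d_def[symmetric] u_def[symmetric] i_def[symmetric]
    by simp
  also have "\<dots> = - wa (dpt a b n (i - 1)) h t"
    using xi_wave[OF lt lo hi] diff by simp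
  also have "\<dots> = - wa d h t" unfolding dpti using wa_shift[OF h] by simp
  finally show ?thesis by (simp add: d_def h_def)
qed

lemma acc_y_seg:
  assumes n: "n \<ge> 1" and t: "tt (n - 1) \<le> t" "t < tt n"
  shows "acc_y t = psi (tt (n - 1)) (tt n) n t"
proof -
  have t01: "0 \<le> t" "t < 1" using t tt_ge0[of "n - 1"] tt_lt1[of n] by linarith+
  have the: "(THE m. m \<ge> 1 \<and> tt (m - 1) \<le> t \<and> t < tt m) = n"
  proof (rule the_equality)
    show "n \<ge> 1 \<and> tt (n - 1) \<le> t \<and> t < tt n" using n t by simp
  next
    fix m assume m: "m \<ge> 1 \<and> tt (m - 1) \<le> t \<and> t < tt m"
    show "m = n"
    proof (rule ccontr)
      assume "m \<noteq> n"
      then have "m \<le> n - 1 \<or> n \<le> m - 1" by linarith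
      then show False
      proof
        assume "m \<le> n - 1" then have "tt m \<le> tt (n - 1)" by (rule tt_mono)
        then show False using m t by linarith
      next
        assume "n \<le> m - 1" then have "tt n \<le> tt (m - 1)" by (rule tt_mono)
        then show False using m t by linarith
      qed
    qed
  qed
  show ?thesis using t01 unfolding acc_y_def the by simp
qed

lemma ttm_mono: "1 \<le> m \<Longrightarrow> m \<le> n \<Longrightarrow> ttm m \<le> ttm n"
  using E_antimono[of m n] e2 by (simp add: ttm_E divide_right_mono mult_right_mono)

lemma ttp_mono: "m \<le> n \<Longrightarrow> ttp m \<le> ttp n"
proof (cases "m = 0")
  case True
  assume "m \<le> n"
  show ?thesis
  proof (cases "n = 0")
    case False
    then have "E n * (6 - exp 1) \<le> 1 * 5" using E_le1[of n] e2 e3 E_pos[of n]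
      by (intro mult_mono) auto
    then show ?thesis using True False by (simp add: ttp_0 ttp_E)
  qed (use True in simp)
next
  case False
  assume "m \<le> n"
  then show ?thesis using False E_antimono[of m n] e3
    by (simp add: ttp_E divide_right_mono mult_right_mono)
qed

lemma acc_x_gap:
  assumes n: "n \<ge> 1" and t: "ttp (n - 1) \<le> t" "t < ttm n"
  shows "acc_x tau t = 0"
proof -
  have nex: "\<not> (\<exists>m\<ge>1. ttm m \<le> t \<and> t < ttp m)"
  proof
    assume "\<exists>m\<ge>1. ttm m \<le> t \<and> t < ttp m"
    then obtain m where m: "m \<ge> 1" "ttm m \<le> t" "t < ttp m" by blast
    show False
    proof (cases "n \<le> m")
      case True then show ?thesis using ttm_mono[OF n True] m t by linarith
    next
      case False then have "m \<le> n - 1" by simp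
      then show ?thesis using ttp_mono[of m "n - 1"] m t by linarith
    qed
  qed
  show ?thesis by (simp only: acc_x_def if_not_P[OF nex])
qed

lemma acc_x_win:
  assumes n: "n \<ge> 1" and t: "ttm n \<le> t" "t < ttp n"
  shows "acc_x tau t = wt tau n * wa (ttm n) (HH n) t"
proof -
  have the: "(THE m. m \<ge> 1 \<and> ttm m \<le> t \<and> t < ttp m) = n"
  proof (rule the_equality)
    show "n \<ge> 1 \<and> ttm n \<le> t \<and> t < ttp n" using n t by simp
  next
    fix m assume m: "m \<ge> 1 \<and> ttm m \<le> t \<and> t < ttp m"
    show "m = n"
    proof (rule ccontr)
      assume "m \<noteq> n"
      then have "m < n \<or> n < m" by linarith
      then show False
      proof
        assume "m < n" then show False using ttp_ttm[of m n] n m t by linarith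
      next
        assume "n < m" then show False using ttp_ttm[of n m] n m t by linarith
      qed
    qed
  qed
  have ex: "\<exists>m\<ge>1. ttm m \<le> t \<and> t < ttp m" using n t by blast
  have "xi (ttm n) (ttp n) t = - wa (ttm n) (HH n) t"
    using xi_wave[OF ttm_ttp[OF n]] t by (simp add: HH_def)
  then show ?thesis unfolding acc_x_def Let_def the using ex by simp
qed



definition VY :: "nat \<Rightarrow> real \<Rightarrow> real" where
  "VY n t = (if t \<le> d0 n then pv (tt (n - 1)) (cc n) t else - wv (d0 n) (hh n) t)"
definition PY :: "nat \<Rightarrow> real \<Rightarrow> real" where
  "PY n t = (if t \<le> d0 n then pp (tt (n - 1)) (cc n) t else cc n ^ 3 / (8 * pi) - wp (d0 n) (hh n) t)"
definition Yc :: "nat \<Rightarrow> real" where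
  "Yc n = (\<Sum>k\<in>{1..n}. cc k ^ 3 / (8 * pi))"

lemma acc_A:
  assumes n: "n \<ge> 1" and x: "tt (n - 1) \<le> x" "x \<le> d0 n"
  shows "acc_y x = pa (tt (n - 1)) (cc n) x"
proof -
  have "x < tt n" using x ord1[OF n] by linarith
  then have "acc_y x = psi (tt (n - 1)) (tt n) n x" using acc_y_seg[OF n] x by simp
  also have "\<dots> = pa (tt (n - 1)) (cc n) x" using psi_A x by (simp add: d0_def cc_def)
  finally show ?thesis .
qed

lemma acc_B:
  assumes n: "n \<ge> 1" and x: "d0 n < x" "x < tt n"
  shows "acc_y x = - wa (d0 n) (hh n) x"
proof -
  have "tt (n - 1) \<le> x" using x ord1[OF n] by linarith
  then have "acc_y x = psi (tt (n - 1)) (tt n) n x" using acc_y_seg[OF n] x by simp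
  also have "\<dots> = - wa (d0 n) (hh n) x"
    using psi_B[OF n _ _ ] x ord1[OF n] tt_strict[of "n - 1" n] n
    by (simp add: d0_def hh_def)
  finally show ?thesis .
qed

lemma seg_acc_y:
  assumes n: "n \<ge> 1" and t: "tt (n - 1) \<le> t" "t \<le> tt n"
  shows "(acc_y has_integral VY n t) {tt (n - 1)..t}"
proof -
  define a where "a = tt (n - 1)"
  have c: "cc n > 0" using cc_pos[OF n] .
  have h: "hh n > 0" using hh_pos[OF n] .
  have dac: "d0 n = a + cc n" by (simp add: a_def d0_cc)
  show ?thesis
  proof (cases "t \<le> d0 n")
    case True
    have "(pa a (cc n) has_integral (pv a (cc n) t - pv a (cc n) a)) {a..t}"
      by (rule pa_int[OF c]) (use t in \<open>simp add: a_def\<close>)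
    then have "(pa a (cc n) has_integral VY n t) {a..t}"
      using True by (simp add: pv_0 VY_def a_def)
    then show ?thesis unfolding a_def
      by (rule has_integral_eq[rotated]) (use acc_A[OF n] True in \<open>auto simp: a_def\<close>)
  next
    case False
    have ad: "a \<le> d0 n" using ord1[OF n] by (simp add: a_def)
    have I1: "(pa a (cc n) has_integral (pv a (cc n) (d0 n) - pv a (cc n) a)) {a..d0 n}"
      by (rule pa_int[OF c ad])
    then have "(pa a (cc n) has_integral 0) {a..d0 n}" by (simp add: pv_0 dac pv_end[OF c])
    then have I1': "(acc_y has_integral 0) {a..d0 n}"
      by (rule has_integral_eq[rotated]) (auto simp: a_def acc_A[OF n])
    have I2: "(wa (d0 n) (hh n) has_integral (wv (d0 n) (hh n) t - wv (d0 n) (hh n) (d0 n))) {d0 n..t}"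
      by (rule wa_int[OF h]) (use False in simp)
    then have "((\<lambda>x. - wa (d0 n) (hh n) x) has_integral - wv (d0 n) (hh n) t) {d0 n..t}"
      using has_integral_neg[OF I2] by (simp add: wv_0)
    then have I2': "(acc_y has_integral - wv (d0 n) (hh n) t) {d0 n..t}"
      by (rule has_integral_spike_finite[where S="{d0 n, t}", rotated 2]) (use t acc_B[OF n] in auto)
    have "(acc_y has_integral (0 + - wv (d0 n) (hh n) t)) {a..t}"
      by (rule has_integral_combine[OF ad _ I1' I2']) (use False in simp)
    then show ?thesis using False by (simp add: VY_def a_def)
  qed
qed

lemma seg_vel_y:
  assumes n: "n \<ge> 1" and V: "\<And>x. tt (n - 1) \<le> x \<Longrightarrow> x \<le> tt n \<Longrightarrow> vel_y x = VY n x"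
    and t: "tt (n - 1) \<le> t" "t \<le> tt n"
  shows "(vel_y has_integral PY n t) {tt (n - 1)..t}"
proof -
  define a where "a = tt (n - 1)"
  have c: "cc n > 0" using cc_pos[OF n] .
  have h: "hh n > 0" using hh_pos[OF n] .
  have dac: "d0 n = a + cc n" by (simp add: a_def d0_cc)
  have dn: "d0 n < tt n" using ord1[OF n] by simp
  show ?thesis
  proof (cases "t \<le> d0 n")
    case True
    have "(pv a (cc n) has_integral (pp a (cc n) t - pp a (cc n) a)) {a..t}"
      by (rule pv_int[OF c]) (use t in \<open>simp add: a_def\<close>)
    then have "(pv a (cc n) has_integral PY n t) {a..t}"
      using True by (simp add: pp_0 PY_def a_def)
    then show ?thesis unfolding a_def
      by (rule has_integral_eq[rotated]) (use V True dn in \<open>auto simp: a_def VY_def\<close>)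
  next
    case False
    have ad: "a \<le> d0 n" using ord1[OF n] by (simp add: a_def)
    have I1: "(pv a (cc n) has_integral (pp a (cc n) (d0 n) - pp a (cc n) a)) {a..d0 n}"
      by (rule pv_int[OF c ad])
    then have "(pv a (cc n) has_integral cc n ^ 3 / (8 * pi)) {a..d0 n}"
      by (simp add: pp_0 dac pp_end[OF c])
    then have I1': "(vel_y has_integral cc n ^ 3 / (8 * pi)) {a..d0 n}"
      by (rule has_integral_eq[rotated]) (use V dn in \<open>auto simp: a_def VY_def\<close>)
    have I2: "(wv (d0 n) (hh n) has_integral (wp (d0 n) (hh n) t - wp (d0 n) (hh n) (d0 n))) {d0 n..t}"
      by (rule wv_int[OF h]) (use False in simp)
    then have "((\<lambda>x. - wv (d0 n) (hh n) x) has_integral - wp (d0 n) (hh n) t) {d0 n..t}"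
      using has_integral_neg[OF I2] by (simp add: wp_0)
    then have I2': "(vel_y has_integral - wp (d0 n) (hh n) t) {d0 n..t}"
      by (rule has_integral_spike_finite[where S="{d0 n}", rotated 2])
         (use t V ad in \<open>auto simp: VY_def a_def\<close>)
    have "(vel_y has_integral (cc n ^ 3 / (8 * pi) + - wp (d0 n) (hh n) t)) {a..t}"
      by (rule has_integral_combine[OF ad _ I1' I2']) (use False in simp)
    then show ?thesis using False by (simp add: PY_def a_def)
  qed
qed

lemma VY_end: "n \<ge> 1 \<Longrightarrow> VY n (tt n) = 0"
  using ord1[of n] wv_period[OF hh_pos, of n "d0 n" n] d0_end[of n]
  by (simp add: VY_def)

lemma PY_end: "n \<ge> 1 \<Longrightarrow> PY n (tt n) = cc n ^ 3 / (8 * pi)"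
  using ord1[of n] wp_period[OF hh_pos, of n "d0 n" n] d0_end[of n]
  by (simp add: PY_def)

lemma y_ind: "(acc_y has_integral 0) {0..tt n} \<and> (vel_y has_integral Yc n) {0..tt n}"
proof (induction n)
  case 0
  show ?case by (simp add: tt_0 Yc_def has_integral_refl(2))
next
  case (Suc n)
  define m where "m = Suc n"
  have m: "m \<ge> 1" by (simp add: m_def)
  have mm: "m - 1 = n" by (simp add: m_def)
  have A: "(acc_y has_integral VY m t) {0..t}" if t: "tt n \<le> t" "t \<le> tt m" for t
  proof -
    have "(acc_y has_integral (0 + VY m t)) {0..t}"
      by (rule has_integral_combine[OF tt_ge0 t(1)]) 
         (use Suc.IH seg_acc_y[OF m, of t] t mm in auto)
    then show ?thesis by simp
  qed
  have V: "vel_y t = VY m t" if t: "tt (m - 1) \<le> t" "t \<le> tt m" for t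
    using A[of t] t integral_unique unfolding vel_y_def mm by auto
  have "(vel_y has_integral (Yc n + PY m (tt m))) {0..tt m}"
    by (rule has_integral_combine[OF tt_ge0 tt_mono])
       (use Suc.IH seg_vel_y[OF m V, of "tt m"] mm tt_mono[of n m] in \<open>auto simp: m_def\<close>)
  moreover have "Yc n + PY m (tt m) = Yc m"
    using PY_end[OF m] by (simp add: Yc_def m_def)
  moreover have "(acc_y has_integral 0) {0..tt m}"
    using A[of "tt m"] VY_end[OF m] tt_mono[of n m] by (simp add: m_def)
  ultimately show ?case by (simp add: m_def)
qed

lemma seg_y:
  assumes n: "n \<ge> 1" and t: "tt (n - 1) \<le> t" "t \<le> tt n"
  shows "vel_y t = VY n t" "pos_y t = Yc (n - 1) + PY n t"
proof -
  have V: "vel_y x = VY n x" if x: "tt (n - 1) \<le> x" "x \<le> tt n" for x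
  proof -
    have "(acc_y has_integral (0 + VY n x)) {0..x}"
      by (rule has_integral_combine[OF tt_ge0 x(1)]) (use y_ind seg_acc_y[OF n x] in auto)
    then show ?thesis unfolding vel_y_def using integral_unique by auto
  qed
  show "vel_y t = VY n t" by (rule V[OF t])
  have "(vel_y has_integral (Yc (n - 1) + PY n t)) {0..t}"
    by (rule has_integral_combine[OF tt_ge0 t(1)]) (use y_ind seg_vel_y[OF n V t] in auto)
  then show "pos_y t = Yc (n - 1) + PY n t" unfolding pos_y_def using integral_unique by auto
qed



definition VX :: "(nat \<Rightarrow> enat) \<Rightarrow> nat \<Rightarrow> real \<Rightarrow> real" where
  "VX tau n t = wt tau n * wv (ttm n) (HH n) t"
definition PX :: "(nat \<Rightarrow> enat) \<Rightarrow> nat \<Rightarrow> real \<Rightarrow> real" where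
  "PX tau n t = wt tau n * wp (ttm n) (HH n) t"

lemma gap_acc:
  assumes n: "n \<ge> 1" and t: "ttp (n - 1) \<le> t" "t \<le> ttm n"
  shows "(acc_x tau has_integral 0) {ttp (n - 1)..t}"
  by (rule has_integral_spike_finite[where S="{t}" and f="\<lambda>x. 0"]) (use acc_x_gap[OF n] t in auto)

lemma win_acc:
  assumes n: "n \<ge> 1" and t: "ttm n \<le> t" "t \<le> ttp n"
  shows "(acc_x tau has_integral VX tau n t) {ttm n..t}"
proof -
  have I: "(wa (ttm n) (HH n) has_integral (wv (ttm n) (HH n) t - wv (ttm n) (HH n) (ttm n))) {ttm n..t}"
    by (rule wa_int[OF HH_pos[OF n] t(1)])
  have "((\<lambda>x. wt tau n * wa (ttm n) (HH n) x) has_integral VX tau n t) {ttm n..t}"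
    using has_integral_mult_right[OF I, of "wt tau n"] by (simp add: wv_0 VX_def)
  then show ?thesis
    by (rule has_integral_spike_finite[where S="{t}", rotated 2]) (use acc_x_win[OF n] t in auto)
qed

lemma gap_vel:
  assumes "\<And>x. x \<in> {s..t} \<Longrightarrow> vel_x tau x = 0"
  shows "(vel_x tau has_integral 0) {s..t}"
  by (rule has_integral_eq[where f="\<lambda>x. 0"]) (use assms in auto)

lemma win_vel:
  assumes n: "n \<ge> 1" and V: "\<And>x. x \<in> {ttm n..ttp n} \<Longrightarrow> vel_x tau x = VX tau n x"
    and t: "ttm n \<le> t" "t \<le> ttp n"
  shows "(vel_x tau has_integral PX tau n t) {ttm n..t}"
proof -
  have I: "(wv (ttm n) (HH n) has_integral (wp (ttm n) (HH n) t - wp (ttm n) (HH n) (ttm n))) {ttm n..t}"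
    by (rule wv_int[OF HH_pos[OF n] t(1)])
  have "((\<lambda>x. wt tau n * wv (ttm n) (HH n) x) has_integral PX tau n t) {ttm n..t}"
    using has_integral_mult_right[OF I, of "wt tau n"] by (simp add: wp_0 PX_def)
  then show ?thesis
    by (rule has_integral_eq[rotated]) (use V t in \<open>auto simp: VX_def\<close>)
qed

lemma VX_end: "n \<ge> 1 \<Longrightarrow> VX tau n (ttp n) = 0"
  using wv_period[OF HH_pos, of n "ttm n" 1] ttm_end[of n] by (simp add: VX_def)
lemma PX_end: "n \<ge> 1 \<Longrightarrow> PX tau n (ttp n) = 0"
  using wp_period[OF HH_pos, of n "ttm n" 1] ttm_end[of n] by (simp add: PX_def)

lemma ttp_ge0: "ttp n \<ge> 0" using ttp_mono[of 0 n] by (simp add: ttp_0)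

lemma x_facts:
  assumes n: "n \<ge> 1" and I: "(acc_x tau has_integral 0) {0..ttp (n - 1)}"
  shows "\<And>t. t \<in> {ttp (n - 1)..ttm n} \<Longrightarrow> (acc_x tau has_integral 0) {0..t}"
    and "\<And>t. t \<in> {ttm n..ttp n} \<Longrightarrow> (acc_x tau has_integral VX tau n t) {0..t}"
proof -
  have o: "ttp (n - 1) \<le> ttm n" using ttp_ttm[of "n - 1" n] n by simp
  show G: "(acc_x tau has_integral 0) {0..t}" if "t \<in> {ttp (n - 1)..ttm n}" for t
    using has_integral_combine[OF ttp_ge0 _ I gap_acc[OF n]] that by auto
  show "(acc_x tau has_integral VX tau n t) {0..t}" if "t \<in> {ttm n..ttp n}" for t
    using has_integral_combine[OF _ _ G[of "ttm n"] win_acc[OF n]] that o ttp_ge0[of "n - 1"]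
    by auto
qed

lemma x_ind: "(acc_x tau has_integral 0) {0..ttp n} \<and> (vel_x tau has_integral 0) {0..ttp n}"
proof (induction n)
  case 0
  show ?case by (simp add: ttp_0 has_integral_refl(2))
next
  case (Suc n)
  define m where "m = Suc n"
  have m: "m \<ge> 1" by (simp add: m_def)
  have mm: "m - 1 = n" by (simp add: m_def)
  have I: "(acc_x tau has_integral 0) {0..ttp (m - 1)}" using Suc.IH mm by simp
  have o: "ttp (m - 1) \<le> ttm m" using ttp_ttm[of "m - 1" m] m by simp
  have o2: "ttm m \<le> ttp m" using ttm_ttp[OF m] by simp
  have V0: "vel_x tau t = 0" if "t \<in> {ttp (m - 1)..ttm m}" for t
    using x_facts(1)[OF m I that] integral_unique unfolding vel_x_def by auto
  have V1: "vel_x tau t = VX tau m t" if "t \<in> {ttm m..ttp m}" for t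
    using x_facts(2)[OF m I that] integral_unique unfolding vel_x_def by auto
  have "(vel_x tau has_integral (0 + 0)) {0..ttm m}"
    by (rule has_integral_combine[OF ttp_ge0 o]) (use Suc.IH mm gap_vel[OF V0] in auto)
  then have X: "(vel_x tau has_integral 0) {0..ttm m}" by simp
  have "(vel_x tau has_integral (0 + PX tau m (ttp m))) {0..ttp m}"
    by (rule has_integral_combine[OF _ o2 X win_vel[OF m V1 o2 order_refl]])
       (use o ttp_ge0[of "m - 1"] in linarith)
  moreover have "(acc_x tau has_integral 0) {0..ttp m}"
    using x_facts(2)[OF m I, of "ttp m"] VX_end[OF m] o2 by simp
  ultimately show ?case using PX_end[OF m] by (simp add: m_def)
qed

lemma seg_x:
  assumes n: "n \<ge> 1"
  shows "\<And>t. t \<in> {ttp (n - 1)..ttm n} \<Longrightarrow> vel_x tau t = 0 \<and> pos_x tau t = 0"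
    and "\<And>t. t \<in> {ttm n..ttp n} \<Longrightarrow> vel_x tau t = VX tau n t \<and> pos_x tau t = PX tau n t"
proof -
  have I: "(acc_x tau has_integral 0) {0..ttp (n - 1)}" using x_ind by blast
  have o: "ttp (n - 1) \<le> ttm n" using ttp_ttm[of "n - 1" n] n by simp
  have V0: "vel_x tau t = 0" if "t \<in> {ttp (n - 1)..ttm n}" for t
    using x_facts(1)[OF n I that] integral_unique unfolding vel_x_def by auto
  have V1: "vel_x tau t = VX tau n t" if "t \<in> {ttm n..ttp n}" for t
    using x_facts(2)[OF n I that] integral_unique unfolding vel_x_def by auto
  have P0: "(vel_x tau has_integral 0) {0..t}" if t: "t \<in> {ttp (n - 1)..ttm n}" for t
  proof -
    have "(vel_x tau has_integral (0 + 0)) {0..t}"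
      by (rule has_integral_combine[OF ttp_ge0[of "n - 1"]]) (use x_ind t V0 in \<open>auto intro!: gap_vel\<close>)
    then show ?thesis by simp
  qed
  show "vel_x tau t = 0 \<and> pos_x tau t = 0" if "t \<in> {ttp (n - 1)..ttm n}" for t
    using V0[OF that] P0[OF that] integral_unique unfolding pos_x_def by auto
  show "vel_x tau t = VX tau n t \<and> pos_x tau t = PX tau n t" if t: "t \<in> {ttm n..ttp n}" for t
  proof -
    have "(vel_x tau has_integral (0 + PX tau n t)) {0..t}"
      by (rule has_integral_combine[OF _ _ P0[of "ttm n"] win_vel[OF n V1]])
         (use t o ttp_ge0[of "n - 1"] in auto)
    then show ?thesis using V1[OF t] integral_unique unfolding pos_x_def by auto
  qed
qed



lemma cont_loc:
  fixes f :: "real \<Rightarrow> 'a::metric_space"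
  assumes c: "continuous_on {0..c} f" and t: "0 \<le> t" "t < c"
  shows "continuous (at t within {0..1}) f"
proof -
  have "continuous (at t within {0..c}) f"
    using c t by (simp add: continuous_on_eq_continuous_within)
  then have C: "\<forall>e>0. \<exists>d>0. \<forall>x\<in>{0..c}. dist x t < d \<longrightarrow> dist (f x) (f t) < e"
    by (simp add: continuous_within_eps_delta)
  show ?thesis unfolding continuous_within_eps_delta
  proof (intro allI impI)
    fix e :: real assume e: "e > 0"
    obtain d where d: "d > 0" "\<forall>x\<in>{0..c}. dist x t < d \<longrightarrow> dist (f x) (f t) < e"
      using C e by blast
    show "\<exists>d>0. \<forall>x\<in>{0..1}. dist x t < d \<longrightarrow> dist (f x) (f t) < e"
    proof (intro exI[of _ "min d (c - t)"] conjI ballI impI)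
      show "min d (c - t) > 0" using d t by simp
      fix x :: real assume x: "x \<in> {0..1}" "dist x t < min d (c - t)"
      then have "x \<in> {0..c}" "dist x t < d" using t by (auto simp: dist_real_def)
      then show "dist (f x) (f t) < e" using d by blast
    qed
  qed
qed

lemma E_small: "x > 0 \<Longrightarrow> \<exists>N. E N < x"
proof -
  assume x: "x > 0"
  obtain N :: nat where N: "- ln x < real N" using reals_Archimedean2 by blast
  then have "exp (- real N) < exp (ln x)" by simp
  then show ?thesis using x by (auto simp: E_def)
qed

lemma seg_exists:
  assumes t: "0 \<le> t" "t < 1"
  shows "\<exists>n\<ge>1. tt (n - 1) \<le> t \<and> t < tt n"
proof -
  obtain N where "E N < 1 - t" using E_small[of "1 - t"] t by auto
  then have N: "t < tt N" by (simp add: tt_E)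
  define n where "n = (LEAST n. t < tt n)"
  have n: "t < tt n" unfolding n_def by (rule LeastI[of _ N]) (rule N)
  have n1: "n \<ge> 1" using n t tt_0 by (cases n) auto
  have "\<not> t < tt (n - 1)" unfolding n_def
    by (rule not_less_Least) (use n1 in \<open>simp add: n_def\<close>)
  then show ?thesis using n n1 by auto
qed

lemma win_exists:
  assumes t: "0 \<le> t" "t < 1"
  shows "\<exists>n\<ge>1. ttp (n - 1) \<le> t \<and> t < ttp n"
proof -
  obtain N where "E N < 1 - t" using E_small[of "1 - t"] t by auto
  then have "t < tt (Suc N)" using E_antimono[of N "Suc N"] by (simp add: tt_E)
  then have N: "t < ttp (Suc N)" using ord1(5)[of "Suc N"] by simp
  define n where "n = (LEAST n. t < ttp n)"
  have n: "t < ttp n" unfolding n_def by (rule LeastI[of _ "Suc N"]) (rule N)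
  have n1: "n \<ge> 1" using n t ttp_0 by (cases n) auto
  have "\<not> t < ttp (n - 1)" unfolding n_def
    by (rule not_less_Least) (use n1 in \<open>simp add: n_def\<close>)
  then show ?thesis using n n1 by auto
qed

lemma wt_bounds: "0 \<le> wt tau n \<and> wt tau n \<le> 1"
  by (cases "tau n") (auto simp: wt_def power_le_one)

lemma vel_y_bound:
  assumes t: "0 \<le> t" "t < 1"
  shows "\<bar>vel_y t\<bar> \<le> 4 * (1 - t)"
proof -
  obtain n where n: "n \<ge> 1" "tt (n - 1) \<le> t" "t < tt n" using seg_exists[OF t] by blast
  have Et: "E n \<le> 1 - t" using n by (simp add: tt_E)
  have pi1: "pi \<ge> 1" using pi_gt3 by simp
  have "E n * (5 * (exp 1 - 1)) \<le> E n * 12" using e3 E_pos[of n] by (intro mult_left_mono) auto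
  then have Ec: "cc n \<le> 2 * E n" by (simp add: cc_E[OF n(1)] algebra_simps)
  have Eh: "hh n \<le> 2 * E n"
  proof -
    have "hh n = E n * (exp 1 - 1) / (6 * real n)" by (rule hh_E[OF n(1)])
    also have "\<dots> \<le> E n * (exp 1 - 1) / 1" using n(1) E_pos[of n] e2
      by (intro divide_left_mono) auto
    also have "\<dots> \<le> 2 * E n" using e3 E_pos[of n] by simp
    finally show ?thesis .
  qed
  have E1: "2 * E n \<le> 2" using E_le1[of n] by simp
  have sq: "\<And>x. 0 \<le> x \<Longrightarrow> x \<le> 2 * E n \<Longrightarrow> x\<^sup>2 \<le> 4 * E n"
  proof -
    fix x :: real assume x: "0 \<le> x" "x \<le> 2 * E n"
    have "x\<^sup>2 \<le> (2 * E n)\<^sup>2" by (rule power_mono) (use x in auto)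
    also have "\<dots> = 2 * E n * (2 * E n)" by (simp add: power2_eq_square)
    also have "\<dots> \<le> 2 * (2 * E n)" using E1 E_pos[of n] by (intro mult_right_mono) auto
    finally show "x\<^sup>2 \<le> 4 * E n" by simp
  qed
  have "\<bar>VY n t\<bar> \<le> 4 * E n"
  proof (cases "t \<le> d0 n")
    case True
    have "\<bar>pv (tt (n - 1)) (cc n) t\<bar> \<le> (cc n)\<^sup>2 / (4 * pi)"
      using pv_nonneg[OF cc_pos[OF n(1)]] pv_le[OF cc_pos[OF n(1)]] by auto
    also have "\<dots> \<le> (cc n)\<^sup>2" using pi1 by (simp add: divide_le_eq mult_le_cancel_left1)
    also have "\<dots> \<le> 4 * E n" using sq[of "cc n"] cc_pos[OF n(1)] Ec by simp
    finally show ?thesis using True by (simp add: VY_def)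
  next
    case False
    have "\<bar>wv (d0 n) (hh n) t\<bar> \<le> (hh n)\<^sup>2 / (16 * pi)" by (rule wv_bound[OF hh_pos[OF n(1)]])
    also have "\<dots> \<le> (hh n)\<^sup>2" using pi1 by (simp add: divide_le_eq mult_le_cancel_left1)
    also have "\<dots> \<le> 4 * E n" using sq[of "hh n"] hh_pos[OF n(1)] Eh by simp
    finally show ?thesis using False by (simp add: VY_def)
  qed
  then show ?thesis using seg_y(1)[OF n(1) n(2)] n(3) Et by simp
qed

lemma vel_x_bound:
  assumes t: "0 \<le> t" "t < 1"
  shows "\<bar>vel_x tau t\<bar> \<le> 4 * (1 - t)"
proof -
  obtain n where n: "n \<ge> 1" "ttp (n - 1) \<le> t" "t < ttp n" using win_exists[OF t] by blast
  show ?thesis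
  proof (cases "t \<le> ttm n")
    case True
    then show ?thesis using seg_x(1)[OF n(1), of t tau] n t by simp
  next
    case False
    have v: "vel_x tau t = VX tau n t" using seg_x(2)[OF n(1), of t tau] n False by simp
    have Et: "3 * E n \<le> 5 * (1 - t)"
    proof -
      have "E n * 3 \<le> E n * (6 - exp 1)" using e3 E_pos[of n] by simp
      then show ?thesis using n ttp_E[OF n(1)] by simp
    qed
    have pi1: "pi \<ge> 1" using pi_gt3 by simp
    have "E n * (exp 1 - 1) \<le> 1 * 2" by (rule mult_mono) (use E_le1[of n] e3 e2 in auto)
    then have H: "HH n \<le> 1" "0 < HH n" using HH_E[OF n(1)] HH_pos[OF n(1)] by auto
    have "E n * (2 * (exp 1 - 1)) \<le> E n * 4" using e3 E_pos[of n] by (intro mult_left_mono) auto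
    then have H2: "5 * HH n \<le> 4 * E n" using HH_E[OF n(1)] by (simp add: algebra_simps)
    have "\<bar>VX tau n t\<bar> \<le> 1 * ((HH n)\<^sup>2 / (16 * pi))"
      unfolding VX_def abs_mult
      by (rule mult_mono) (use wt_bounds[of tau n] wv_bound[OF HH_pos[OF n(1)]] in auto)
    also have "\<dots> \<le> (HH n)\<^sup>2" using pi1 by (simp add: divide_le_eq mult_le_cancel_left1)
    also have "\<dots> \<le> HH n" using H by (simp add: power2_eq_square mult_le_cancel_right1)
    finally show ?thesis using v Et H2 by simp
  qed
qed

lemma int01:
  fixes f :: "real \<Rightarrow> real"
  assumes C: "\<And>N. continuous_on {0..tt N} f" and B: "\<And>t. 0 \<le> t \<Longrightarrow> t < 1 \<Longrightarrow> \<bar>f t\<bar> \<le> 4 * (1 - t)"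
  shows "f integrable_on {0..1}"
proof -
  define W where "W t = (if t = 1 then 0 else f t)" for t
  have "continuous_on {0..1} W" unfolding continuous_on_eq_continuous_within
  proof
    fix t :: real assume t: "t \<in> {0..1}"
    show "continuous (at t within {0..1}) W"
    proof (cases "t = 1")
      case False
      obtain N where "E N < 1 - t" using E_small[of "1 - t"] t False by auto
      then have N: "t < tt N" by (simp add: tt_E)
      have "continuous_on {0..tt N} W"
        by (rule continuous_on_eq[OF C]) (use tt_lt1[of N] in \<open>auto simp: W_def\<close>)
      then show ?thesis by (rule cont_loc) (use t N in auto)
    next
      case True
      show ?thesis unfolding True continuous_within_eps_delta
      proof (intro allI impI)
        fix e :: real assume e: "e > 0"
        show "\<exists>d>0. \<forall>x\<in>{0..1}. dist x 1 < d \<longrightarrow> dist (W x) (W 1) < e"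
        proof (intro exI[of _ "e / 4"] conjI ballI impI)
          fix x :: real assume x: "x \<in> {0..1}" "dist x 1 < e / 4"
          show "dist (W x) (W 1) < e"
          proof (cases "x = 1")
            case False
            then have "\<bar>f x\<bar> \<le> 4 * (1 - x)" using B x by auto
            then show ?thesis using False x by (auto simp: W_def dist_real_def)
          qed (use e in \<open>simp add: W_def\<close>)
        qed (use e in simp)
      qed
    qed
  qed
  then have "W integrable_on {0..1}" by (rule integrable_continuous_interval)
  then show ?thesis
    by (rule integrable_spike_finite[where S="{1}", rotated 2]) (auto simp: W_def)
qed

lemma cont_vel_y: "continuous_on {0..tt N} vel_y"
  unfolding vel_y_def[abs_def]
  by (rule indefinite_integral_continuous_1) (use y_ind in blast)

lemma cont_vel_x: "continuous_on {0..tt N} (vel_x tau)"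
proof -
  have "continuous_on {0..ttp N} (vel_x tau)"
    unfolding vel_x_def[abs_def]
    by (rule indefinite_integral_continuous_1) (use x_ind in blast)
  moreover have "tt N \<le> ttp N" using ord1(5)[of N] by (cases "N = 0") (auto simp: tt_0 ttp_0)
  ultimately show ?thesis using continuous_on_subset by fastforce
qed

lemma cont_pos_y: "continuous_on {0..1} pos_y"
  unfolding pos_y_def[abs_def]
  by (rule indefinite_integral_continuous_1 int01 cont_vel_y vel_y_bound)+

lemma cont_pos_x: "continuous_on {0..1} (pos_x tau)"
  unfolding pos_x_def[abs_def]
  by (rule indefinite_integral_continuous_1 int01 cont_vel_x vel_x_bound)+

lemma E_pow: "E n = exp (-1) ^ n"
  using exp_of_nat_mult[of n "-1"] by (simp add: E_def)

lemma E_lim: "E \<longlonglongrightarrow> 0"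
  unfolding E_pow[abs_def] by (rule LIMSEQ_power_zero) simp

lemma tt_lim: "tt \<longlonglongrightarrow> 1"
  unfolding tt_E[abs_def] using tendsto_diff[OF tendsto_const E_lim, of 1] by simp

lemma ttp_lim: "(\<lambda>n. ttp (Suc n)) \<longlonglongrightarrow> 1"
proof -
  have "(\<lambda>n. 1 - E (Suc n) * (6 - exp 1) / 5) \<longlonglongrightarrow> 1 - 0 * (6 - exp 1) / 5"
    by (intro tendsto_intros LIMSEQ_Suc[OF E_lim]) auto
  moreover have eq: "\<And>n. ttp (Suc n) = 1 - E (Suc n) * (6 - exp 1) / 5" by (rule ttp_E) simp
  ultimately show ?thesis by simp
qed

lemma ttp_lt1: "n \<ge> 1 \<Longrightarrow> ttp n < 1"
  using E_pos[of n] e3 by (simp add: ttp_E)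

lemma pos_y_tt: "pos_y (tt n) = Yc n"
  unfolding pos_y_def using y_ind integral_unique by blast

lemma cube5: "(5 * x - 5) ^ 3 = 125 * (x - 1 :: real) ^ 3"
  by (simp add: power3_eq_cube algebra_simps)

lemma Yc_lim: "Yc \<longlonglongrightarrow> 5^3 * (exp 1 - 1)^3 / (6^3 * 8 * pi * (exp 1 ^ 3 - 1))"
proof -
  define q :: real where "q = exp (-3)"
  define K where "K = (5 * (exp 1 - 1) / 6) ^ 3 / (8 * pi)"
  have q: "0 < q" "q < 1" by (auto simp: q_def)
  have trm: "cc k ^ 3 / (8 * pi) = K * q ^ k" if k: "k \<ge> 1" for k
  proof -
    have a: "exp (- real k) ^ 3 = exp (real 3 * (- real k))" by (rule exp_of_nat_mult[symmetric])
    have b: "exp (-3) ^ k = exp (real k * (-3::real))" by (rule exp_of_nat_mult[symmetric])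
    have "E k ^ 3 = q ^ k" unfolding E_def q_def a b by (simp add: mult.commute)
    moreover have cck: "cc k = (5 * (exp 1 - 1) / 6) * E k" using cc_E[OF k] by simp
    have "cc k ^ 3 = (5 * (exp 1 - 1) / 6) ^ 3 * E k ^ 3" by (subst cck) (rule power_mult_distrib)
    ultimately show ?thesis by (simp add: K_def)
  qed
  have Y: "Yc n = K * q * (\<Sum>k<n. q ^ k)" for n
  proof -
    have "Yc n = (\<Sum>k\<in>{1..n}. K * q ^ k)" unfolding Yc_def by (rule sum.cong) (auto simp: trm)
    also have "\<dots> = (\<Sum>k<n. K * q ^ Suc k)" using sum.atLeast1_atMost_eq[of "\<lambda>k. K * q ^ k" n] by simp
    also have "\<dots> = K * q * (\<Sum>k<n. q ^ k)" by (simp add: sum_distrib_left mult.assoc)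
    finally show ?thesis .
  qed
  have "(\<lambda>n. \<Sum>k<n. q ^ k) \<longlonglongrightarrow> 1 / (1 - q)"
    using geometric_sums[of q] q by (simp add: sums_def)
  then have "Yc \<longlonglongrightarrow> K * q * (1 / (1 - q))"
    unfolding Y[abs_def] by (intro tendsto_intros)
  moreover have "K * q * (1 / (1 - q)) = 5^3 * (exp 1 - 1)^3 / (6^3 * 8 * pi * (exp 1 ^ 3 - 1))"
  proof -
    have e3: "exp 1 ^ 3 = exp (3::real)" using exp_of_nat_mult[of 3 "1::real"] by simp
    have qi: "q = 1 / exp 3" by (simp add: q_def exp_minus field_simps)
    have g1: "exp (3::real) > 1" by simp
    have qq: "q * (1 / (1 - q)) = 1 / (exp 3 - 1)"
      unfolding qi using g1 by (simp add: field_simps)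
    have "K * q * (1 / (1 - q)) = K * (1 / (exp 3 - 1))" by (simp only: mult.assoc qq)
    also have "\<dots> = 5^3 * (exp 1 - 1)^3 / (6^3 * 8 * pi * (exp 3 - 1))"
      using cube5[of "exp 1"] by (simp add: K_def power_divide power_mult_distrib)
    finally show ?thesis unfolding e3 .
  qed
  ultimately show ?thesis by simp
qed

lemma pos_y_1: "pos_y 1 = 5^3 * (exp 1 - 1)^3 / (6^3 * 8 * pi * (exp 1 ^ 3 - 1))"
proof -
  have "(\<lambda>n. pos_y (tt n)) \<longlonglongrightarrow> pos_y 1"
    by (rule continuous_on_tendsto_compose[OF cont_pos_y tt_lim])
       (auto intro!: always_eventually simp: tt_ge0 tt_lt1 less_imp_le)
  then have "Yc \<longlonglongrightarrow> pos_y 1" unfolding pos_y_tt .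
  then show ?thesis using Yc_lim LIMSEQ_unique by blast
qed

lemma pos_x_1: "pos_x tau 1 = 0"
proof -
  have "(\<lambda>n. pos_x tau (ttp (Suc n))) \<longlonglongrightarrow> pos_x tau 1"
    by (rule continuous_on_tendsto_compose[OF cont_pos_x ttp_lim])
       (auto intro!: always_eventually simp: ttp_ge0 ttp_lt1 less_imp_le)
  moreover have "pos_x tau (ttp (Suc n)) = 0" for n
    using seg_x(1)[of "Suc (Suc n)" "ttp (Suc n)" tau] ttp_ttm[of "Suc n" "Suc (Suc n)"] by simp
  ultimately have "(\<lambda>n. 0) \<longlonglongrightarrow> pos_x tau 1" by simp
  then show ?thesis by (simp add: LIMSEQ_const_iff)
qed

lemma pos_0: "pos_x tau 0 = 0" "pos_y 0 = 0"
  by (simp_all add: pos_x_def pos_y_def)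



definition Yp :: "nat \<Rightarrow> real" where "Yp n = pos_y (pq n)"
definition linn :: "nat \<Rightarrow> real \<Rightarrow> real" where
  "linn n t = Yp n + (t - pq n) / (tt n - pq n) * (Yc n - Yp n)"
definition gseg :: "(nat \<Rightarrow> enat) \<Rightarrow> nat \<Rightarrow> real \<Rightarrow> real" where
  "gseg tau n t = (if wt tau n = 0 \<and> pq n \<le> t then linn n t else pos_y t)"
definition gy :: "(nat \<Rightarrow> enat) \<Rightarrow> real \<Rightarrow> real" where
  "gy tau t = (if 0 < t \<and> t < 1 then gseg tau (LEAST n. t \<le> tt n) t else pos_y t)"
definition garc :: "(nat \<Rightarrow> enat) \<Rightarrow> real \<Rightarrow> real \<times> real" where
  "garc tau t = (pos_x tau t, gy tau t)"

lemma Yc_suc: "n \<ge> 1 \<Longrightarrow> Yc n = Yc (n - 1) + cc n ^ 3 / (8 * pi)"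
  by (cases n) (auto simp: Yc_def)

lemma term_nonneg: "1 \<le> b \<Longrightarrow> 0 \<le> cc b ^ 3 / (8 * pi)"
  using cc_pos[of b] by simp

lemma Yc_mono: "m \<le> n \<Longrightarrow> Yc m \<le> Yc n"
  unfolding Yc_def by (rule sum_mono2) (use term_nonneg in auto)

lemma Yc_step: "n \<ge> 1 \<Longrightarrow> Yc (n - 1) < Yc n"
  using Yc_suc[of n] cc_pos[of n] by simp

lemma pos_y_seg: "n \<ge> 1 \<Longrightarrow> tt (n - 1) \<le> t \<Longrightarrow> t \<le> tt n \<Longrightarrow> pos_y t = Yc (n - 1) + PY n t"
  by (rule seg_y(2))

lemma FY1:
  assumes n: "n \<ge> 1" and st: "tt (n - 1) \<le> s" "s < s'" "s' \<le> d0 n"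
  shows "pos_y s < pos_y s'"
proof -
  have "s' \<le> tt n" using st ord1[OF n] by linarith
  then have "pos_y s = Yc (n - 1) + pp (tt (n - 1)) (cc n) s"
       "pos_y s' = Yc (n - 1) + pp (tt (n - 1)) (cc n) s'"
    using pos_y_seg[OF n] st by (auto simp: PY_def)
  moreover have "pp (tt (n - 1)) (cc n) s < pp (tt (n - 1)) (cc n) s'"
    by (rule pp_strict[OF cc_pos[OF n] st(1,2)]) (use st in \<open>simp add: d0_cc\<close>)
  ultimately show ?thesis by simp
qed

lemma pos_y_d0: "n \<ge> 1 \<Longrightarrow> pos_y (d0 n) = Yc n"
  using pos_y_seg[of n "d0 n"] ord1[of n] pp_end[OF cc_pos, of n "tt (n - 1)"] Yc_suc[of n]
  by (simp add: PY_def d0_cc)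

lemma pos_y_a: "n \<ge> 1 \<Longrightarrow> pos_y (tt (n - 1)) = Yc (n - 1)"
  using pos_y_tt by simp

lemma Yp_val: "n \<ge> 1 \<Longrightarrow> Yp n = Yc (n - 1) + cc n ^ 3 / (8 * pi) * (3 / 4 + 1 / (2 * pi))"
proof -
  assume n: "n \<ge> 1"
  have "pq n \<le> d0 n" "tt (n - 1) \<le> pq n" using ord1[OF n] by linarith+
  then have "pos_y (pq n) = Yc (n - 1) + pp (tt (n - 1)) (cc n) (pq n)"
    using pos_y_seg[OF n, of "pq n"] ord1[OF n] by (simp add: PY_def)
  then show ?thesis using pp_34[OF cc_pos[OF n], of "tt (n - 1)"] by (simp add: Yp_def pq_def)
qed

lemma pi_facts: "3 / 4 + 1 / (2 * pi) < 1" "0 < 3 / 4 + 1 / (2 * pi)"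
  using pi_gt3 by (auto simp: field_simps)

lemma FY4: "n \<ge> 1 \<Longrightarrow> Yc (n - 1) < Yp n \<and> Yp n < Yc n"
proof -
  assume n: "n \<ge> 1"
  have c: "cc n ^ 3 / (8 * pi) > 0" using cc_pos[OF n] by simp
  have "cc n ^ 3 / (8 * pi) * (3 / 4 + 1 / (2 * pi)) < cc n ^ 3 / (8 * pi) * 1"
    by (rule mult_strict_left_mono[OF pi_facts(1) c])
  moreover have "0 < cc n ^ 3 / (8 * pi) * (3 / 4 + 1 / (2 * pi))"
    using c pi_facts(2) by (rule mult_pos_pos)
  ultimately show ?thesis using Yp_val[OF n] Yc_suc[OF n] by simp
qed

lemma wp_small:
  assumes n: "n \<ge> 1"
  shows "wp (d0 n) (hh n) t < cc n ^ 3 / (8 * pi) * (1 - (3 / 4 + 1 / (2 * pi)))"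
proof -
  have c: "cc n > 0" using cc_pos[OF n] .
  have h: "hh n > 0" using hh_pos[OF n] .
  have hc: "hh n \<le> cc n / 5"
  proof -
    have "hh n = E n * (exp 1 - 1) / (6 * real n)" by (rule hh_E[OF n])
    also have "\<dots> \<le> E n * (exp 1 - 1) / 6" using n E_pos[of n] e2
      by (intro divide_left_mono) auto
    also have "\<dots> = cc n / 5" by (simp add: cc_E[OF n])
    finally show ?thesis .
  qed
  have h3: "hh n ^ 3 \<le> (cc n / 5) ^ 3" by (rule power_mono[OF hc]) (use h in simp)
  have "wp (d0 n) (hh n) t \<le> hh n ^ 3 / (64 * pi\<^sup>2) * (pi + 1)" using wp_bounds[OF h] by blast
  also have "\<dots> \<le> (cc n / 5) ^ 3 / (64 * pi\<^sup>2) * (pi + 1)"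
    by (intro mult_right_mono divide_right_mono h3) auto
  also have "\<dots> = cc n ^ 3 * ((pi + 1) / (8000 * pi\<^sup>2))" by (simp add: power_divide)
  also have "\<dots> < cc n ^ 3 * ((pi - 2) / (32 * pi\<^sup>2))"
  proof (rule mult_strict_left_mono)
    have "(pi + 1) * 32 < (pi - 2) * 8000" using pi_gt3 by simp
    then show "(pi + 1) / (8000 * pi\<^sup>2) < (pi - 2) / (32 * pi\<^sup>2)"
      by (simp add: field_simps)
  qed (use c in simp)
  also have "\<dots> = cc n ^ 3 / (8 * pi) * (1 - (3 / 4 + 1 / (2 * pi)))"
    by (simp add: field_simps power2_eq_square)
  finally show ?thesis .
qed

lemma aux3: "\<And>a b y C X :: real. a = y + C * X \<Longrightarrow> b = y + C \<Longrightarrow> a = b - C * (1 - X)"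
  by (simp add: algebra_simps)

lemma FY3:
  assumes n: "n \<ge> 1" and t: "d0 n \<le> t" "t \<le> tt n"
  shows "Yp n < pos_y t \<and> pos_y t \<le> Yc n"
proof (cases "t = d0 n")
  case True then show ?thesis using pos_y_d0[OF n] FY4[OF n] by simp
next
  case False
  then have td: "d0 n < t" using t by simp
  have "tt (n - 1) \<le> t" using ord1[OF n] td by linarith
  then have py: "pos_y t = Yc n - wp (d0 n) (hh n) t"
    using pos_y_seg[OF n _ t(2)] td Yc_suc[OF n] by (simp add: PY_def)
  have "0 \<le> wp (d0 n) (hh n) t" using wp_bounds[OF hh_pos[OF n]] by blast
  moreover have "Yp n = Yc n - cc n ^ 3 / (8 * pi) * (1 - (3 / 4 + 1 / (2 * pi)))"
    by (rule aux3[OF Yp_val[OF n] Yc_suc[OF n]])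
  ultimately show ?thesis using py wp_small[OF n, of t] by simp
qed

lemma FX3:
  assumes n: "n \<ge> 1" and w: "wt tau n > 0" and st: "ttm n \<le> s" "s < s'" "s' \<le> tt n"
  shows "pos_x tau s < pos_x tau s'"
proof -
  have le: "s' \<le> ttp n" using st ord1[OF n] by linarith
  have "pos_x tau s = PX tau n s" "pos_x tau s' = PX tau n s'"
    using seg_x(2)[OF n, of s tau] seg_x(2)[OF n, of s' tau] st le by auto
  moreover have "wp (ttm n) (HH n) s < wp (ttm n) (HH n) s'"
    by (rule wp_strict[OF HH_pos[OF n] st(1,2)]) (use st ttm_mid[OF n] in simp)
  ultimately show ?thesis using w by (simp add: PX_def)
qed

lemma FX0: "n \<ge> 1 \<Longrightarrow> pos_x tau (ttm n) = 0"
  using seg_x(2)[of n "ttm n" tau] ttm_ttp[of n] by (simp add: PX_def wp_0)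

lemma FX1: "n \<ge> 1 \<Longrightarrow> ttp (n - 1) \<le> t \<Longrightarrow> t \<le> ttm n \<Longrightarrow> pos_x tau t = 0"
  using seg_x(1) by simp

lemma ZX:
  assumes n: "n \<ge> 1" and w: "wt tau n = 0" and t: "pq n \<le> t" "t \<le> tt n"
  shows "pos_x tau t = 0"
proof (cases "t \<le> ttm n")
  case True then show ?thesis using FX1[OF n] ord1[OF n] t by simp
next
  case False
  then show ?thesis using seg_x(2)[OF n, of t tau] w t ord1[OF n] by (simp add: PX_def)
qed

lemma tt_pq: "n \<ge> 1 \<Longrightarrow> pq n < tt n" using ord1[of n] by linarith

lemma linn_pq: "n \<ge> 1 \<Longrightarrow> linn n (pq n) = Yp n" by (simp add: linn_def)
lemma linn_tt: "n \<ge> 1 \<Longrightarrow> linn n (tt n) = Yc n"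
  using tt_pq[of n] by (simp add: linn_def)

lemma linn_range:
  assumes n: "n \<ge> 1" and t: "pq n \<le> t" "t \<le> tt n"
  shows "Yp n \<le> linn n t \<and> linn n t \<le> Yc n"
proof -
  have D: "tt n - pq n > 0" using tt_pq[OF n] by simp
  have r: "0 \<le> (t - pq n) / (tt n - pq n)" "(t - pq n) / (tt n - pq n) \<le> 1"
    using t D by (auto simp: divide_le_eq)
  have Y: "Yc n - Yp n > 0" using FY4[OF n] by simp
  have "(t - pq n) / (tt n - pq n) * (Yc n - Yp n) \<le> 1 * (Yc n - Yp n)"
    by (rule mult_right_mono[OF r(2)]) (use Y in simp)
  moreover have "0 \<le> (t - pq n) / (tt n - pq n) * (Yc n - Yp n)"
    by (rule mult_nonneg_nonneg) (use r Y in auto)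
  ultimately show ?thesis by (simp add: linn_def)
qed

lemma linn_strict:
  assumes n: "n \<ge> 1" and st: "s < s'"
  shows "linn n s < linn n s'"
proof -
  have D: "tt n - pq n > 0" using tt_pq[OF n] by simp
  have Y: "Yc n - Yp n > 0" using FY4[OF n] by simp
  have "(s - pq n) / (tt n - pq n) < (s' - pq n) / (tt n - pq n)"
    using st D by (simp add: divide_strict_right_mono)
  then have "(s - pq n) / (tt n - pq n) * (Yc n - Yp n) < (s' - pq n) / (tt n - pq n) * (Yc n - Yp n)"
    using Y by (rule mult_strict_right_mono)
  then show ?thesis unfolding linn_def by (rule add_strict_left_mono)
qed

lemma least_seg:
  assumes n: "n \<ge> 1" and t: "tt (n - 1) < t" "t \<le> tt n"
  shows "(LEAST k. t \<le> tt k) = n"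
proof (rule Least_equality)
  show "t \<le> tt n" by (rule t(2))
next
  fix k assume k: "t \<le> tt k"
  show "n \<le> k"
  proof (rule ccontr)
    assume "\<not> n \<le> k" then have "k \<le> n - 1" by simp
    then have "tt k \<le> tt (n - 1)" by (rule tt_mono)
    then show False using k t by linarith
  qed
qed

lemma gseg_end: "n \<ge> 1 \<Longrightarrow> gseg tau n (tt n) = pos_y (tt n)"
proof -
  assume n: "n \<ge> 1"
  show ?thesis using linn_tt[OF n] pos_y_tt[of n] by (simp add: gseg_def)
qed

lemma G1:
  assumes n: "n \<ge> 1" and t: "tt (n - 1) \<le> t" "t \<le> tt n"
  shows "gy tau t = gseg tau n t"
proof -
  have t1: "t < 1" using t tt_lt1[of n] by linarith
  have nm: "gseg tau n t = pos_y t" if "t = tt (n - 1)"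
    using that ord1[OF n] by (simp add: gseg_def)
  show ?thesis
  proof (cases "t = tt (n - 1)")
    case False
    then have "tt (n - 1) < t" using t by simp
    moreover have "0 < t" using calculation tt_ge0[of "n - 1"] by linarith
    ultimately show ?thesis using least_seg[OF n _ t(2)] t1 by (simp add: gy_def)
  next
    case True
    show ?thesis
    proof (cases "n = 1")
      case True
      then have "t = 0" using \<open>t = tt (n - 1)\<close> by (simp add: tt_0)
      then show ?thesis using nm \<open>t = tt (n - 1)\<close> by (simp add: gy_def)
    next
      case False
      then have m: "n - 1 \<ge> 1" using n by simp
      have "tt (n - 1 - 1) < tt (n - 1)" using m by (intro tt_strict) simp
      then have "(LEAST k. t \<le> tt k) = n - 1" using least_seg[OF m] True by simp
      moreover have "0 < t" using True tt_strict[of 0 "n - 1"] m tt_0 by simp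
      ultimately have "gy tau t = gseg tau (n - 1) (tt (n - 1))" using t1 True by (simp add: gy_def)
      also have "\<dots> = pos_y t" using gseg_end[OF m] True by simp
      finally show ?thesis using nm True by simp
    qed
  qed
qed

lemma G2:
  assumes n: "n \<ge> 1" and t: "tt (n - 1) \<le> t" "t \<le> tt n"
  shows "gseg tau n t \<le> Yc n \<and> Yc (n - 1) \<le> gseg tau n t \<and> (tt (n - 1) < t \<longrightarrow> Yc (n - 1) < gseg tau n t)"
proof (cases "wt tau n = 0 \<and> pq n \<le> t")
  case True
  then show ?thesis using linn_range[OF n _ t(2)] FY4[OF n] by (simp add: gseg_def)
next
  case False
  then have g: "gseg tau n t = pos_y t" unfolding gseg_def by (simp only: if_not_P if_False)
  show ?thesis
  proof (cases "t \<le> d0 n")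
    case True
    have "pos_y t \<le> Yc n"
      using FY1[OF n t(1), of "d0 n"] True pos_y_d0[OF n] by (cases "t = d0 n") auto
    moreover have "tt (n - 1) < t \<longrightarrow> Yc (n - 1) < pos_y t"
      using FY1[OF n order_refl, of t] True pos_y_a[OF n] by auto
    moreover have "Yc (n - 1) \<le> pos_y t"
      using calculation(2) t pos_y_a[OF n] by (cases "t = tt (n - 1)") auto
    ultimately show ?thesis using g by simp
  next
    case False
    then show ?thesis using FY3[OF n _ t(2)] FY4[OF n] g by simp
  qed
qed

lemma G3:
  assumes n: "n \<ge> 1" and w: "wt tau n = 0" and st: "tt (n - 1) \<le> s" "s < s'" "s' \<le> tt n"
  shows "gseg tau n s < gseg tau n s'"
proof (cases "pq n \<le> s")
  case True
  then show ?thesis using linn_strict[OF n st(2)] w st by (simp add: gseg_def)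
next
  case False
  note o = ord1[OF n]
  show ?thesis
  proof (cases "pq n \<le> s'")
    case True
    have "pos_y s < pos_y (pq n)" using FY1[OF n st(1), of "pq n"] False o by simp
    moreover have "Yp n \<le> linn n s'" using linn_range[OF n True st(3)] by simp
    ultimately show ?thesis using False True w by (simp add: gseg_def Yp_def)
  next
    case F2: False
    have "pos_y s < pos_y s'" using FY1[OF n st(1,2)] F2 o by simp
    then show ?thesis using False F2 by (simp add: gseg_def)
  qed
qed



lemma seg_exists2:
  assumes t: "0 < t" "t < 1"
  shows "\<exists>m\<ge>1. tt (m - 1) < t \<and> t \<le> tt m"
proof -
  obtain N where "E N < 1 - t" using E_small[of "1 - t"] t by auto
  then have N: "t \<le> tt N" by (simp add: tt_E)
  define m where "m = (LEAST n. t \<le> tt n)"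
  have m: "t \<le> tt m" unfolding m_def by (rule LeastI[of _ N]) (rule N)
  have m1: "m \<ge> 1" using m t tt_0 by (cases m) auto
  have "\<not> t \<le> tt (m - 1)" unfolding m_def
    by (rule not_less_Least) (use m1 in \<open>simp add: m_def\<close>)
  then show ?thesis using m m1 by auto
qed

lemma Yc_lt_lim: "Yc n < pos_y 1"
proof -
  have inc: "incseq Yc" by (rule incseq_SucI) (simp add: Yc_mono)
  have "Yc \<longlonglongrightarrow> pos_y 1" using Yc_lim pos_y_1 by simp
  then have "Yc (Suc n) \<le> pos_y 1" by (rule incseq_le[OF inc])
  moreover have "Yc n < Yc (Suc n)" using Yc_step[of "Suc n"] by simp
  ultimately show ?thesis by simp
qed

lemma wt_cases: "wt tau n = 0 \<or> wt tau n > 0"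
  using wt_bounds[of tau n] by auto

lemma inj_lemma:
  assumes st: "s < s'" "0 \<le> s" "s' \<le> 1"
  shows "garc tau s \<noteq> garc tau s'"
proof
  assume eq: "garc tau s = garc tau s'"
  then have ex: "pos_x tau s = pos_x tau s'" and ey: "gy tau s = gy tau s'"
    by (auto simp: garc_def)
  obtain n where n: "n \<ge> 1" "tt (n - 1) \<le> s" "s < tt n" using seg_exists[of s] st by auto
  have gs: "gy tau s = gseg tau n s" using G1[OF n(1,2)] n(3) by simp
  have gsle: "gy tau s \<le> Yc n" using G2[OF n(1,2)] n(3) gs by simp
  show False
  proof (cases "s' = 1")
    case True
    then have "gy tau s' = pos_y 1" by (simp add: gy_def)
    then show False using ey gsle Yc_lt_lim[of n] by simp
  next
    case False
    obtain m where m: "m \<ge> 1" "tt (m - 1) < s'" "s' \<le> tt m" using seg_exists2[of s'] st False by auto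
    have gs': "gy tau s' = gseg tau m s'" using G1[OF m(1) _ m(3)] m(2) by simp
    have gs'gt: "Yc (m - 1) < gy tau s'" using G2[OF m(1) _ m(3)] m(2) gs' by simp
    show False
    proof (cases "n \<le> m - 1")
      case True
      then show False using Yc_mono[OF True] gsle gs'gt ey by simp
    next
      case False
      then have "m - 1 \<le> n - 1" by simp
      then have sm: "tt (m - 1) \<le> s" using tt_mono n(2) by (meson order_trans)
      have gsm: "gy tau s = gseg tau m s" using G1[OF m(1) sm] st m(3) by simp
      note o = ord1[OF m(1)]
      show False
      proof (cases "wt tau m = 0")
        case True
        then show False using G3[OF m(1) True sm st(1) m(3)] gsm gs' ey by simp
      next
        case wpos: False
        then have w: "wt tau m > 0" using wt_cases by auto
        have p1: "gseg tau m s = pos_y s" "gseg tau m s' = pos_y s'" using wpos by (auto simp: gseg_def)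
        show False
        proof (cases "s' \<le> d0 m")
          case True
          then show False using FY1[OF m(1) sm st(1) True] p1 gsm gs' ey by simp
        next
          case False
          then have s'd: "d0 m < s'" by simp
          show False
          proof (cases "s < pq m")
            case True
            have "pos_y s < pos_y (pq m)" using FY1[OF m(1) sm True] o by simp
            moreover have "Yp m < pos_y s'" using FY3[OF m(1) _ m(3)] s'd by simp
            ultimately show False using p1 gsm gs' ey by (simp add: Yp_def)
          next
            case F2: False
            show False
            proof (cases "s < ttm m")
              case True
              have "pos_x tau s = 0" using FX1[OF m(1)] F2 True o by simp
              moreover have "pos_x tau (ttm m) < pos_x tau s'"
                using FX3[OF m(1) w order_refl _ m(3)] s'd o by simp
              ultimately show False using FX0[OF m(1)] ex by simp
            next
              case F3: False
              then show False using FX3[OF m(1) w _ st(1) m(3)] ex by simp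
            qed
          qed
        qed
      qed
    qed
  qed
qed

lemma inj_garc: "inj_on (garc tau) {0..1}"
proof (rule inj_onI)
  fix s s' assume s: "s \<in> {0..1}" "s' \<in> {0..1}" and eq: "garc tau s = garc tau s'"
  show "s = s'"
  proof (rule ccontr)
    assume "s \<noteq> s'"
    then have "s < s' \<or> s' < s" by auto
    then show False using inj_lemma[of s s' tau] inj_lemma[of s' s tau] s eq by auto
  qed
qed

lemma C1:
  assumes n: "n \<ge> 1"
  shows "continuous_on {tt (n - 1)..tt n} (gseg tau n)"
proof (cases "wt tau n = 0")
  case False
  have "continuous_on {tt (n - 1)..tt n} pos_y"
    by (rule continuous_on_subset[OF cont_pos_y]) (use tt_ge0[of "n - 1"] tt_lt1[of n] in auto)
  then show ?thesis by (rule continuous_on_eq) (use False in \<open>simp add: gseg_def\<close>)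
next
  case True
  note o = ord1[OF n]
  have u: "{tt (n - 1)..tt n} = {tt (n - 1)..pq n} \<union> {pq n..tt n}" using o by auto
  have c1: "continuous_on {tt (n - 1)..pq n} (gseg tau n)"
  proof -
    have "continuous_on {tt (n - 1)..pq n} pos_y"
      by (rule continuous_on_subset[OF cont_pos_y]) (use tt_ge0[of "n - 1"] tt_lt1[of n] o in auto)
    then show ?thesis
      by (rule continuous_on_eq) (use True linn_pq[OF n] in \<open>auto simp: gseg_def Yp_def\<close>)
  qed
  have c2: "continuous_on {pq n..tt n} (gseg tau n)"
  proof -
    have "continuous_on {pq n..tt n} (linn n)" unfolding linn_def[abs_def]
      by (intro continuous_intros) (use o in auto)
    then show ?thesis by (rule continuous_on_eq) (use True in \<open>auto simp: gseg_def\<close>)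
  qed
  show ?thesis unfolding u by (rule continuous_on_closed_Un[OF _ _ c1 c2]) auto
qed

lemma C2: "continuous_on {0..tt N} (gy tau)"
proof (induction N)
  case 0
  show ?case by (simp add: tt_0)
next
  case (Suc N)
  have u: "{0..tt (Suc N)} = {0..tt N} \<union> {tt N..tt (Suc N)}"
    using tt_ge0[of N] tt_strict[of N "Suc N"] by auto
  have "continuous_on {tt N..tt (Suc N)} (gseg tau (Suc N))" using C1[of "Suc N" tau] by simp
  then have c: "continuous_on {tt N..tt (Suc N)} (gy tau)"
    by (rule continuous_on_eq) (use G1[of "Suc N"] in auto)
  show ?case unfolding u by (rule continuous_on_closed_Un[OF _ _ Suc.IH c]) auto
qed

lemma rep:
  assumes t: "0 \<le> t" "t < 1"
  shows "\<exists>s\<in>{0..1}. gy tau t = pos_y s \<and> 1 - s \<le> 2 * (1 - t)"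
proof -
  obtain n where n: "n \<ge> 1" "tt (n - 1) \<le> t" "t < tt n" using seg_exists[OF t] by blast
  have g: "gy tau t = gseg tau n t" using G1[OF n(1,2)] n(3) by simp
  note o = ord1[OF n(1)]
  show ?thesis
  proof (cases "wt tau n = 0 \<and> pq n \<le> t")
    case False
    then show ?thesis using g t by (auto simp: gseg_def)
  next
    case True
    have lr: "Yp n \<le> linn n t \<and> linn n t \<le> Yc n" using linn_range[OF n(1)] True n(3) by simp
    have "\<exists>s. pq n \<le> s \<and> s \<le> d0 n \<and> pos_y s = linn n t"
      by (rule IVT') (use lr pos_y_d0[OF n(1)] o cont_pos_y tt_ge0[of "n - 1"] tt_lt1[of n]
          in \<open>auto simp: Yp_def intro: continuous_on_subset\<close>)
    then obtain s where s: "pq n \<le> s" "s \<le> d0 n" "pos_y s = linn n t" by blast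
    have "1 - pq n \<le> 2 * E n"
    proof -
      have "E n * (3 * exp 1 + 5) \<le> E n * 16" using e3 E_pos[of n] by (intro mult_left_mono) auto
      then show ?thesis using pq_E[OF n(1)] by simp
    qed
    moreover have "E n \<le> 1 - t" using n(3) by (simp add: tt_E)
    moreover have "s \<in> {0..1}" using s o tt_ge0[of "n - 1"] tt_lt1[of n] by auto
    ultimately show ?thesis using s g True by (intro bexI[of _ s]) (auto simp: gseg_def)
  qed
qed

lemma cont_gy: "continuous_on {0..1} (gy tau)"
  unfolding continuous_on_eq_continuous_within
proof
  fix t :: real assume t: "t \<in> {0..1}"
  show "continuous (at t within {0..1}) (gy tau)"
  proof (cases "t = 1")
    case False
    obtain N where "E N < 1 - t" using E_small[of "1 - t"] t False by auto
    then have N: "t < tt N" by (simp add: tt_E)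
    show ?thesis by (rule cont_loc[OF C2[of N]]) (use t N in auto)
  next
    case True
    have c1: "continuous (at 1 within {0..1}) pos_y"
      using cont_pos_y by (simp add: continuous_on_eq_continuous_within)
    show ?thesis unfolding True continuous_within_eps_delta
    proof (intro allI impI)
      fix e :: real assume e: "e > 0"
      obtain d where d: "d > 0" "\<forall>x\<in>{0..1}. dist x 1 < d \<longrightarrow> dist (pos_y x) (pos_y 1) < e"
        using c1 e unfolding continuous_within_eps_delta by blast
      show "\<exists>d>0. \<forall>x\<in>{0..1}. dist x 1 < d \<longrightarrow> dist (gy tau x) (gy tau 1) < e"
      proof (intro exI[of _ "d / 2"] conjI ballI impI)
        fix x :: real assume x: "x \<in> {0..1}" "dist x 1 < d / 2"
        show "dist (gy tau x) (gy tau 1) < e"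
        proof (cases "x = 1")
          case True then show ?thesis using e by simp
        next
          case False
          then obtain s where s: "s \<in> {0..1}" "gy tau x = pos_y s" "1 - s \<le> 2 * (1 - x)"
            using rep[of x tau] x by auto
          have "dist s 1 < d" using s x by (auto simp: dist_real_def)
          then show ?thesis using d s by (simp add: gy_def)
        qed
      qed (use d in simp)
    qed
  qed
qed

lemma dich:
  assumes t: "0 \<le> t" "t \<le> 1"
  shows "gy tau t = pos_y t \<or> (\<exists>n\<ge>1. wt tau n = 0 \<and> pq n \<le> t \<and> t \<le> tt n \<and> gy tau t = linn n t)"
proof (cases "t = 1")
  case True then show ?thesis by (simp add: gy_def)
next
  case False
  then obtain n where n: "n \<ge> 1" "tt (n - 1) \<le> t" "t < tt n" using seg_exists[of t] t by auto
  have g: "gy tau t = gseg tau n t" using G1[OF n(1,2)] n(3) by simp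
  then show ?thesis using n by (cases "wt tau n = 0 \<and> pq n \<le> t") (auto simp: gseg_def)
qed

lemma image_eq: "garc tau ` {0..1} = svec tau ` {0..1}"
proof
  show "garc tau ` {0..1} \<subseteq> svec tau ` {0..1}"
  proof
    fix z assume "z \<in> garc tau ` {0..1}"
    then obtain t where t: "t \<in> {0..1}" "z = garc tau t" by auto
    show "z \<in> svec tau ` {0..1}"
    proof (cases "gy tau t = pos_y t")
      case True
      then show ?thesis using t by (auto simp: garc_def svec_def)
    next
      case False
      then obtain n where n: "n \<ge> 1" "wt tau n = 0" "pq n \<le> t" "t \<le> tt n" "gy tau t = linn n t"
        using dich[of t tau] t by auto
      note o = ord1[OF n(1)]
      have lr: "Yp n \<le> linn n t \<and> linn n t \<le> Yc n" using linn_range[OF n(1,3,4)] .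
      have "\<exists>s. pq n \<le> s \<and> s \<le> d0 n \<and> pos_y s = linn n t"
        by (rule IVT') (use lr pos_y_d0[OF n(1)] o cont_pos_y tt_ge0[of "n - 1"] tt_lt1[of n]
            in \<open>auto simp: Yp_def intro: continuous_on_subset\<close>)
      then obtain s where s: "pq n \<le> s" "s \<le> d0 n" "pos_y s = linn n t" by blast
      have "pos_x tau s = 0" using ZX[OF n(1,2) s(1)] s o by simp
      moreover have "pos_x tau t = 0" using ZX[OF n(1,2,3,4)] .
      moreover have "s \<in> {0..1}" using s o tt_ge0[of "n - 1"] tt_lt1[of n] by auto
      ultimately show ?thesis using t n s by (auto simp: garc_def svec_def image_iff intro!: bexI[of _ s])
    qed
  qed
next
  show "svec tau ` {0..1} \<subseteq> garc tau ` {0..1}"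
  proof
    fix z assume "z \<in> svec tau ` {0..1}"
    then obtain t where t: "t \<in> {0..1}" "z = svec tau t" by auto
    show "z \<in> garc tau ` {0..1}"
    proof (cases "gy tau t = pos_y t")
      case True
      then show ?thesis using t by (auto simp: garc_def svec_def)
    next
      case False
      then obtain n where n: "n \<ge> 1" "wt tau n = 0" "pq n \<le> t" "t \<le> tt n"
        using dich[of t tau] t by auto
      note o = ord1[OF n(1)]
      have py: "Yp n \<le> pos_y t \<and> pos_y t \<le> Yc n"
      proof (cases "t \<le> d0 n")
        case True
        have "pos_y (pq n) \<le> pos_y t"
          using FY1[OF n(1) _ _ True, of "pq n"] o n(3) by (cases "pq n = t") auto
        moreover have "pos_y t \<le> pos_y (d0 n)"
          using FY1[OF n(1) _ _ order_refl, of t] o n(3) True by (cases "t = d0 n") auto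
        ultimately show ?thesis using pos_y_d0[OF n(1)] by (simp add: Yp_def)
      next
        case False
        then show ?thesis using FY3[OF n(1) _ n(4)] by simp
      qed
      have D: "tt n - pq n > 0" "Yc n - Yp n > 0" using o FY4[OF n(1)] by auto
      define s where "s = pq n + (pos_y t - Yp n) / (Yc n - Yp n) * (tt n - pq n)"
      have r: "0 \<le> (pos_y t - Yp n) / (Yc n - Yp n)" "(pos_y t - Yp n) / (Yc n - Yp n) \<le> 1"
        using py D by (auto simp: divide_le_eq)
      have "(pos_y t - Yp n) / (Yc n - Yp n) * (tt n - pq n) \<le> 1 * (tt n - pq n)"
        by (rule mult_right_mono[OF r(2)]) (use D in simp)
      moreover have "0 \<le> (pos_y t - Yp n) / (Yc n - Yp n) * (tt n - pq n)"
        by (rule mult_nonneg_nonneg) (use r D in auto)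
      ultimately have s1: "pq n \<le> s" "s \<le> tt n" by (auto simp: s_def)
      have ls: "linn n s = pos_y t" using D by (simp add: linn_def s_def)
      have gs: "gy tau s = linn n s"
        using G1[OF n(1) _ s1(2)] s1 o n(2) by (simp add: gseg_def)
      have "pos_x tau s = 0" "pos_x tau t = 0" using ZX[OF n(1,2)] s1 n by auto
      moreover have "s \<in> {0..1}" using s1 o tt_ge0[of "n - 1"] tt_lt1[of n] by auto
      ultimately show ?thesis using t gs ls
        by (auto simp: garc_def svec_def image_iff intro!: bexI[of _ s])
    qed
  qed
qed

theorem corollary3p7:
  fixes tau :: "nat \<Rightarrow> enat"
  shows "svec tau 0 = (0, 0)
    \<and> svec tau 1 = (0, 5^3 * (exp 1 - 1)^3 / (6^3 * 8 * pi * (exp 1 ^ 3 - 1)))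
    \<and> (\<exists>g :: real \<Rightarrow> real \<times> real. arc g \<and> path_image g = Gam tau
          \<and> pathstart g = svec tau 0 \<and> pathfinish g = svec tau 1)"
proof (intro conjI exI[of _ "garc tau"])
  show "svec tau 0 = (0, 0)" using pos_0 by (simp add: svec_def)
  show "svec tau 1 = (0, 5^3 * (exp 1 - 1)^3 / (6^3 * 8 * pi * (exp 1 ^ 3 - 1)))"
    using pos_x_1 pos_y_1 by (simp add: svec_def)
  have "path (garc tau)" unfolding path_def garc_def[abs_def]
    by (intro continuous_on_Pair cont_pos_x cont_gy)
  then show "arc (garc tau)" unfolding arc_def using inj_garc by simp
  show "path_image (garc tau) = Gam tau" unfolding path_image_def Gam_def by (rule image_eq)
  show "pathstart (garc tau) = svec tau 0" by (simp add: pathstart_def garc_def svec_def gy_def)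
  show "pathfinish (garc tau) = svec tau 1" by (simp add: pathfinish_def garc_def svec_def gy_def)
qed

end
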